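(* Let $n\ge2$, $R>0$, $\varepsilon>0$. Suppose $r^{n-1}f\in L^1((0,R))$, $f\ge0$ a.e. in $(0,R)$ and $f\not\equiv0$. Then there is a nonnegative classical solution to the problem $-\varepsilon r^{n-1}\Big(\frac{1}{r^{n-1}}w_r\Big)_r+\frac{1}{n r^{n(n-1)}}w^n=L_f$ in $(0,R)$, $w(0)=w_r(0)=0$, $w_r(R)=\varepsilon R^{n-1}$.
   Context: $L_f(s):=\int_0^s t^{n-1}f(t)\,dt$. Subscripts $r$ denote derivatives in $r$. A classical solution is a twice differentiable function satisfying the equation in $(0,R)$ and the boundary conditions pointwise. *)

theory Defs
  imports "HOL-Analysis.Analysis"
begin

definition Lf :: "nat \<Rightarrow> (real \<Rightarrow> real) \<Rightarrow> real \<Rightarrow> real" where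
  "Lf n f s = (LINT t:{0..s}|lborel. t ^ (n - 1) * f t)"

end

theory Submission
  imports Defs
begin

lemma maxp_aux:
  fixes u u' u'' :: "real \<Rightarrow> real"
  assumes ab: "a < b"
    and cu: "continuous_on {a..b} u" and cu': "continuous_on {a..b} u'"
    and du: "\<And>x. x \<in> {a<..<b} \<Longrightarrow> (u has_real_derivative u' x) (at x)"
    and du': "\<And>x. x \<in> {a<..<b} \<Longrightarrow> (u' has_real_derivative u'' x) (at x)"
    and pos: "\<And>x. x \<in> {a<..<b} \<Longrightarrow> u x > 0 \<Longrightarrow> u'' x > 0"
    and x0: "x0 \<in> {a<..b}" and u0: "u x0 > 0" and d0: "u' x0 \<le> 0"
    and mx: "\<And>x. x \<in> {a..b} \<Longrightarrow> u x \<le> u x0"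
  shows False
proof -
  have "continuous (at x0 within {a..b}) u" using cu x0 by (simp add: continuous_on_eq_continuous_within)
  then have "\<forall>\<^sub>F x in at x0 within {a..b}. u x > 0" using u0
    by (simp add: continuous_within order_tendstoD(1))
  then obtain d where d: "d > 0" "\<And>x. x \<in> {a..b} \<Longrightarrow> x \<noteq> x0 \<Longrightarrow> dist x x0 < d \<Longrightarrow> u x > 0"
    unfolding eventually_at by blast
  define t where "t = max a (x0 - d/2)"
  have t: "a \<le> t" "t < x0" "x0 - t < d" using x0 d by (auto simp: t_def)
  have posI: "u x > 0" if "x \<in> {t<..x0}" for x
  proof (cases "x = x0")
    case True then show ?thesis using u0 by simp
  next
    case False then show ?thesis using d(2)[of x] that t x0 by (auto simp: dist_real_def)
  qed
  have neg: "u' z < 0" if z: "z \<in> {t<..<x0}" for z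
  proof -
    have "continuous_on {z..x0} u'" using cu' by (rule continuous_on_subset) (use z t x0 in auto)
    moreover have "\<And>x. z < x \<Longrightarrow> x < x0 \<Longrightarrow> u' differentiable (at x)"
      using du' z t x0 unfolding real_differentiable_def
      by (metis greaterThanAtMost_iff greaterThanLessThan_iff le_less_trans less_eq_real_def x0)
    ultimately obtain l y where y: "z < y" "y < x0" "DERIV u' y :> l" "u' x0 - u' z = (x0 - z) * l"
      using MVT[of z x0 u'] z by auto
    have "y \<in> {a<..<b}" using y z t x0 by auto
    then have "l = u'' y" using du'[of y] y(3) DERIV_unique by blast
    moreover have "u'' y > 0" using pos[of y] posI[of y] \<open>y \<in> {a<..<b}\<close> y z by auto
    ultimately have "(x0 - z) * l > 0" using z by auto
    then show ?thesis using y(4) d0 by linarith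
  qed
  have "continuous_on {t..x0} u" using cu by (rule continuous_on_subset) (use t x0 in auto)
  moreover have "\<And>x. t < x \<Longrightarrow> x < x0 \<Longrightarrow> u differentiable (at x)"
    using du t x0 unfolding real_differentiable_def
    by (metis greaterThanAtMost_iff greaterThanLessThan_iff le_less_trans less_eq_real_def x0)
  ultimately obtain l y where y: "t < y" "y < x0" "DERIV u y :> l" "u x0 - u t = (x0 - t) * l"
    using MVT[of t x0 u] t by auto
  have "y \<in> {a<..<b}" using y t x0 by auto
  then have "l = u' y" using du[of y] y(3) DERIV_unique by blast
  then have "u x0 - u t < 0" using y(4) neg[of y] y t by (simp add: mult_pos_neg)
  moreover have "u t \<le> u x0" using mx[of t] t x0 by auto
  ultimately show False by linarith
qed

lemma maxp:
  fixes u u' u'' :: "real \<Rightarrow> real"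
  assumes ab: "a < b"
    and cu: "continuous_on {a..b} u" and cu': "continuous_on {a..b} u'"
    and du: "\<And>x. x \<in> {a<..<b} \<Longrightarrow> (u has_real_derivative u' x) (at x)"
    and du': "\<And>x. x \<in> {a<..<b} \<Longrightarrow> (u' has_real_derivative u'' x) (at x)"
    and pos: "\<And>x. x \<in> {a<..<b} \<Longrightarrow> u x > 0 \<Longrightarrow> u'' x > 0"
    and ua: "u a \<le> 0" and ub: "u' b \<le> 0"
    and x: "x \<in> {a..b}"
  shows "u x \<le> 0"
proof (rule ccontr)
  assume "\<not> u x \<le> 0"
  obtain x0 where x0: "x0 \<in> {a..b}" "\<And>y. y \<in> {a..b} \<Longrightarrow> u y \<le> u x0"
    using continuous_attains_sup[OF compact_Icc _ cu] ab by fastforce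
  have u0: "u x0 > 0" using x0(2)[OF x] \<open>\<not> u x \<le> 0\<close> by linarith
  have "x0 \<noteq> a" using u0 ua by auto
  then have x0': "x0 \<in> {a<..b}" using x0 by auto
  have "u' x0 \<le> 0"
  proof (cases "x0 = b")
    case True then show ?thesis using ub by simp
  next
    case False
    then have "x0 \<in> {a<..<b}" using x0' by auto
    then have "u' x0 = 0"
      apply (intro DERIV_local_max[OF du[of x0], of "min (x0 - a) (b - x0)"])
      using x0(2) by (auto simp: dist_real_def abs_if split: if_splits)
    then show ?thesis by simp
  qed
  then show False using maxp_aux[OF ab cu cu' du du' pos x0' u0 _ x0(2)] by blast
qed

definition I1 :: "real \<Rightarrow> real \<Rightarrow> (real \<Rightarrow> real) \<Rightarrow> real \<Rightarrow> real" where
  "I1 a lam k s = integral {a..s} (\<lambda>t. sinh (lam*(t-a)) * k t)"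
definition I2 :: "real \<Rightarrow> real \<Rightarrow> (real \<Rightarrow> real) \<Rightarrow> real \<Rightarrow> real" where
  "I2 b lam k s = integral {s..b} (\<lambda>t. cosh (lam*(b-t)) * k t)"
definition Wr :: "real \<Rightarrow> real \<Rightarrow> real \<Rightarrow> real" where
  "Wr a b lam = lam * cosh (lam*(b-a))"
definition Sol :: "real \<Rightarrow> real \<Rightarrow> real \<Rightarrow> real \<Rightarrow> (real \<Rightarrow> real) \<Rightarrow> real \<Rightarrow> real" where
  "Sol a b lam eps k s = (cosh (lam*(b-s)) * I1 a lam k s + sinh (lam*(s-a)) * I2 b lam k s) / (eps * Wr a b lam)
      + eps * sinh (lam*(s-a)) / Wr a b lam"
definition SolD :: "real \<Rightarrow> real \<Rightarrow> real \<Rightarrow> real \<Rightarrow> (real \<Rightarrow> real) \<Rightarrow> real \<Rightarrow> real" where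
  "SolD a b lam eps k s = (- lam * sinh (lam*(b-s)) * I1 a lam k s + lam * cosh (lam*(s-a)) * I2 b lam k s) / (eps * Wr a b lam)
      + eps * lam * cosh (lam*(s-a)) / Wr a b lam"

lemma Wr_pos: "lam > 0 \<Longrightarrow> Wr a b lam > 0"
  by (simp add: Wr_def)

lemma I1_deriv:
  assumes "continuous_on {a..b} k" "s \<in> {a..b}"
  shows "(I1 a lam k has_real_derivative sinh (lam*(s-a)) * k s) (at s within {a..b})"
  unfolding I1_def
  by (rule integral_has_real_derivative[OF _ assms(2)]) (intro continuous_intros assms(1))

lemma I2_deriv:
  assumes "continuous_on {a..b} k" "s \<in> {a..b}"
  shows "(I2 b lam k has_real_derivative - (cosh (lam*(b-s)) * k s)) (at s within {a..b})"
  unfolding I2_def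
  by (rule integral_has_real_derivative'[OF _ assms(2)]) (intro continuous_intros assms(1))

lemma Sol_deriv:
  assumes "continuous_on {a..b} k" "s \<in> {a..b}" "lam > 0" "eps > 0"
  shows "(Sol a b lam eps k has_real_derivative SolD a b lam eps k s) (at s within {a..b})"
proof -
  note d1 = I1_deriv[OF assms(1,2), of lam] and d2 = I2_deriv[OF assms(1,2), of lam]
  have W: "Wr a b lam \<noteq> 0" using Wr_pos[OF assms(3), of a b] by simp
  show ?thesis unfolding Sol_def SolD_def
    using W assms(4) by (auto intro!: derivative_eq_intros d1 d2 simp: field_simps)
qed

lemma SolD_deriv:
  assumes "continuous_on {a..b} k" "s \<in> {a<..<b}" "lam > 0" "eps > 0"
  shows "(SolD a b lam eps k has_real_derivative (lam^2 * Sol a b lam eps k s - k s / eps)) (at s)"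
proof -
  have s: "s \<in> {a..b}" using assms(2) by auto
  have at: "at s within {a..b} = at s" using assms(2) by (intro at_within_interior) auto
  note d1 = I1_deriv[OF assms(1) s, of lam, unfolded at] and d2 = I2_deriv[OF assms(1) s, of lam, unfolded at]
  have W: "Wr a b lam \<noteq> 0" using Wr_pos[OF assms(3), of a b] by simp
  have cw: "cosh (lam*(s-a)) * cosh (lam*(b-s)) + sinh (lam*(s-a)) * sinh (lam*(b-s)) = cosh (lam*(b-a))"
    using cosh_add[of "lam*(s-a)" "lam*(b-s)"] by (simp add: algebra_simps)
  have E: "(SolD a b lam eps k has_real_derivative
     (lam*lam* cosh (lam*(b-s)) * I1 a lam k s - lam * sinh (lam*(b-s)) * (sinh (lam*(s-a)) * k s)
      + lam*lam* sinh (lam*(s-a)) * I2 b lam k s - lam * cosh (lam*(s-a)) * (cosh (lam*(b-s)) * k s)) / (eps * Wr a b lam)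
      + eps*lam*lam* sinh (lam*(s-a)) / Wr a b lam) (at s)"
    unfolding SolD_def using W assms(4)
    by (auto intro!: derivative_eq_intros d1 d2 simp: field_simps)
  have "(lam*lam* cosh (lam*(b-s)) * I1 a lam k s - lam * sinh (lam*(b-s)) * (sinh (lam*(s-a)) * k s)
      + lam*lam* sinh (lam*(s-a)) * I2 b lam k s - lam * cosh (lam*(s-a)) * (cosh (lam*(b-s)) * k s)) / (eps * Wr a b lam)
      + eps*lam*lam* sinh (lam*(s-a)) / Wr a b lam
     = lam*lam*((cosh (lam*(b-s)) * I1 a lam k s + sinh (lam*(s-a)) * I2 b lam k s) / (eps * Wr a b lam)
      + eps * sinh (lam*(s-a)) / Wr a b lam) - k s * (lam * (cosh (lam*(s-a)) * cosh (lam*(b-s)) + sinh (lam*(s-a)) * sinh (lam*(b-s)))) / (eps * Wr a b lam)"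
    using W assms(4) by (simp add: field_simps)
  also have "\<dots> = lam^2 * Sol a b lam eps k s - k s / eps"
    unfolding Sol_def cw using W assms(4) by (simp add: Wr_def power2_eq_square)
  finally show ?thesis using E by simp
qed

lemma Sol_a: "Sol a b lam eps k a = 0"
  by (simp add: Sol_def I1_def)

lemma SolD_b: "lam > 0 \<Longrightarrow> eps > 0 \<Longrightarrow> SolD a b lam eps k b = eps"
  by (simp add: SolD_def I2_def Wr_def)

lemma Sol_cont:
  assumes lp: "lam > 0" "eps > 0" and "(\<lambda>t. sinh (lam*(t-a)) * k t) integrable_on {a..b}"
      and "(\<lambda>t. cosh (lam*(b-t)) * k t) integrable_on {a..b}"
  shows "continuous_on {a..b} (Sol a b lam eps k)" "continuous_on {a..b} (SolD a b lam eps k)"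
proof -
  have c1: "continuous_on {a..b} (I1 a lam k)" unfolding I1_def
    by (rule indefinite_integral_continuous_1[OF assms(3)])
  have c2: "continuous_on {a..b} (I2 b lam k)" unfolding I2_def
    by (rule indefinite_integral_continuous_1'[OF assms(4)])
  show "continuous_on {a..b} (Sol a b lam eps k)" unfolding Sol_def
    using Wr_pos[OF lp(1), of a b] lp by (intro continuous_intros c1 c2) auto
  show "continuous_on {a..b} (SolD a b lam eps k)" unfolding SolD_def
    using Wr_pos[OF lp(1), of a b] lp by (intro continuous_intros c1 c2) auto
qed

lemma Sol_cont2:
  assumes lp: "lam > 0" "eps > 0" and "continuous_on {a..b} k"
  shows "continuous_on {a..b} (Sol a b lam eps k)" "continuous_on {a..b} (SolD a b lam eps k)"
proof -
  have "(\<lambda>t. sinh (lam*(t-a)) * k t) integrable_on {a..b}"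
    by (intro integrable_continuous_interval continuous_intros assms)
  moreover have "(\<lambda>t. cosh (lam*(b-t)) * k t) integrable_on {a..b}"
    by (intro integrable_continuous_interval continuous_intros assms)
  ultimately show "continuous_on {a..b} (Sol a b lam eps k)" "continuous_on {a..b} (SolD a b lam eps k)"
    using Sol_cont[OF lp] by blast+
qed

lemma Sol_dom:
  assumes lp: "lam > 0" "eps > 0" and kc: "\<And>j. continuous_on {a..b} (k j)"
    and kb: "\<And>j t. t \<in> {a..b} \<Longrightarrow> \<bar>k j t\<bar> \<le> M"
    and kl: "\<And>t. t \<in> {a..b} \<Longrightarrow> (\<lambda>j. k j t) \<longlonglongrightarrow> kk t"
  shows "(\<lambda>t. sinh (lam*(t-a)) * kk t) integrable_on {a..b}"
    "(\<lambda>t. cosh (lam*(b-t)) * kk t) integrable_on {a..b}"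
    "\<And>s. s \<in> {a..b} \<Longrightarrow> (\<lambda>j. Sol a b lam eps (k j) s) \<longlonglongrightarrow> Sol a b lam eps kk s"
proof -
  have gen: "(\<lambda>t. g t * kk t) integrable_on {c..d} \<and>
     (\<lambda>j. integral {c..d} (\<lambda>t. g t * k j t)) \<longlonglongrightarrow> integral {c..d} (\<lambda>t. g t * kk t)"
    if g: "continuous_on {a..b} g" and cd: "a \<le> c" "d \<le> b" for g c d
  proof -
    have sub: "{c..d} \<subseteq> {a..b}" using cd by auto
    have gc: "continuous_on {c..d} g" using continuous_on_subset[OF g sub] .
    have kc': "continuous_on {c..d} (k j)" for j using continuous_on_subset[OF kc sub] .
    have "(\<lambda>t. g t * k j t) integrable_on {c..d}" for j
      by (intro integrable_continuous_interval continuous_intros gc kc')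
    moreover have "(\<lambda>t. \<bar>g t\<bar> * M) integrable_on {c..d}"
      by (intro integrable_continuous_interval continuous_intros gc)
    moreover have "norm (g t * k j t) \<le> \<bar>g t\<bar> * M" if "t \<in> {c..d}" for j t
      using kb[of t j] that sub by (auto simp: abs_mult intro: mult_left_mono)
    moreover have "(\<lambda>j. g t * k j t) \<longlonglongrightarrow> g t * kk t" if "t \<in> {c..d}" for t
      using kl[of t] that sub by (auto intro: tendsto_intros)
    ultimately show ?thesis using dominated_convergence[of "\<lambda>j t. g t * k j t" "{c..d}" "\<lambda>t. \<bar>g t\<bar> * M" "\<lambda>t. g t * kk t"]
      by blast
  qed
  have g1: "continuous_on {a..b} (\<lambda>t. sinh (lam*(t-a)))" by (intro continuous_intros)
  have g2: "continuous_on {a..b} (\<lambda>t. cosh (lam*(b-t)))" by (intro continuous_intros)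
  show "(\<lambda>t. sinh (lam*(t-a)) * kk t) integrable_on {a..b}" using gen[OF g1 order_refl order_refl] by blast
  show "(\<lambda>t. cosh (lam*(b-t)) * kk t) integrable_on {a..b}" using gen[OF g2 order_refl order_refl] by blast
  fix s assume s: "s \<in> {a..b}"
  have l1: "(\<lambda>j. I1 a lam (k j) s) \<longlonglongrightarrow> I1 a lam kk s" unfolding I1_def
    using gen[OF g1 order_refl, of s] s by auto
  have l2: "(\<lambda>j. I2 b lam (k j) s) \<longlonglongrightarrow> I2 b lam kk s" unfolding I2_def
    using gen[OF g2 _ order_refl, of s] s by auto
  show "(\<lambda>j. Sol a b lam eps (k j) s) \<longlonglongrightarrow> Sol a b lam eps kk s" unfolding Sol_def
    using Wr_pos[OF lp(1), of a b] lp by (intro tendsto_intros l1 l2) auto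
qed

lemma sol_facts:
  assumes ab: "a < b" and kc: "continuous_on {a..b} k" and lp: "lam > 0" "eps > 0"
  shows "continuous_on {a..b} (Sol a b lam eps k)" "continuous_on {a..b} (SolD a b lam eps k)"
    "\<And>x. x \<in> {a..b} \<Longrightarrow> (Sol a b lam eps k has_real_derivative SolD a b lam eps k x) (at x within {a..b})"
    "\<And>x. x \<in> {a<..<b} \<Longrightarrow> (Sol a b lam eps k has_real_derivative SolD a b lam eps k x) (at x)"
    "\<And>x. x \<in> {a<..<b} \<Longrightarrow> (SolD a b lam eps k has_real_derivative (lam^2 * Sol a b lam eps k x - k x / eps)) (at x)"
    "Sol a b lam eps k a = 0" "SolD a b lam eps k b = eps"
proof -
  show "continuous_on {a..b} (Sol a b lam eps k)" "continuous_on {a..b} (SolD a b lam eps k)"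
    using Sol_cont2[OF lp kc] by auto
  show "\<And>x. x \<in> {a..b} \<Longrightarrow> (Sol a b lam eps k has_real_derivative SolD a b lam eps k x) (at x within {a..b})"
    using Sol_deriv[OF kc _ lp] by auto
  show "(Sol a b lam eps k has_real_derivative SolD a b lam eps k x) (at x)" if x: "x \<in> {a<..<b}" for x
  proof -
    have "at x within {a..b} = at x" using x by (intro at_within_interior) auto
    then show ?thesis using Sol_deriv[OF kc _ lp, of x] x by auto
  qed
  show "\<And>x. x \<in> {a<..<b} \<Longrightarrow> (SolD a b lam eps k has_real_derivative (lam^2 * Sol a b lam eps k x - k x / eps)) (at x)"
    using SolD_deriv[OF kc _ lp] by auto
  show "Sol a b lam eps k a = 0" by (rule Sol_a)
  show "SolD a b lam eps k b = eps" using SolD_b lp by auto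
qed

lemma Sol_nonneg:
  assumes ab: "a < b" and kc: "continuous_on {a..b} k" and lp: "lam > 0" "eps > 0"
    and kp: "\<And>x. x \<in> {a..b} \<Longrightarrow> k x \<ge> 0" and x: "x \<in> {a..b}"
  shows "Sol a b lam eps k x \<ge> 0"
proof -
  note F = sol_facts[OF ab kc lp]
  have "- Sol a b lam eps k x \<le> 0"
  proof (rule maxp[OF ab _ _ _ _ _ _ _ x, where u' = "\<lambda>x. - SolD a b lam eps k x"
        and u'' = "\<lambda>x. - (lam^2 * Sol a b lam eps k x - k x / eps)"])
    show "continuous_on {a..b} (\<lambda>x. - Sol a b lam eps k x)" using F(1) by (intro continuous_intros)
    show "continuous_on {a..b} (\<lambda>x. - SolD a b lam eps k x)" using F(2) by (intro continuous_intros)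
    show "((\<lambda>x. - Sol a b lam eps k x) has_real_derivative - SolD a b lam eps k x) (at x)" if "x \<in> {a<..<b}" for x
      using F(4)[OF that] by (intro derivative_intros)
    show "((\<lambda>x. - SolD a b lam eps k x) has_real_derivative - (lam^2 * Sol a b lam eps k x - k x / eps)) (at x)"
      if "x \<in> {a<..<b}" for x
      using F(5)[OF that] by (intro derivative_intros)
    show "- (lam^2 * Sol a b lam eps k x - k x / eps) > 0" if "x \<in> {a<..<b}" "- Sol a b lam eps k x > 0" for x
    proof -
      have "lam^2 * Sol a b lam eps k x < 0" using that(2) lp by (simp add: mult_pos_neg)
      moreover have "k x / eps \<ge> 0" using kp[of x] that(1) lp by auto
      ultimately show ?thesis by linarith
    qed
    show "- Sol a b lam eps k a \<le> 0" using F(6) by simp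
    show "- SolD a b lam eps k b \<le> 0" using F(7) lp by simp
  qed
  then show ?thesis by simp
qed

lemma Sol_mono:
  assumes ab: "a < b" and kc: "continuous_on {a..b} k1" "continuous_on {a..b} k2" and lp: "lam > 0" "eps > 0"
    and kp: "\<And>x. x \<in> {a..b} \<Longrightarrow> k1 x \<le> k2 x" and x: "x \<in> {a..b}"
  shows "Sol a b lam eps k1 x \<le> Sol a b lam eps k2 x"
proof -
  note F1 = sol_facts[OF ab kc(1) lp] and F2 = sol_facts[OF ab kc(2) lp]
  have "Sol a b lam eps k1 x - Sol a b lam eps k2 x \<le> 0"
  proof (rule maxp[OF ab _ _ _ _ _ _ _ x, where u' = "\<lambda>x. SolD a b lam eps k1 x - SolD a b lam eps k2 x"
        and u'' = "\<lambda>x. (lam^2 * Sol a b lam eps k1 x - k1 x / eps) - (lam^2 * Sol a b lam eps k2 x - k2 x / eps)"])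
    show "continuous_on {a..b} (\<lambda>x. Sol a b lam eps k1 x - Sol a b lam eps k2 x)" using F1(1) F2(1) by (intro continuous_intros)
    show "continuous_on {a..b} (\<lambda>x. SolD a b lam eps k1 x - SolD a b lam eps k2 x)" using F1(2) F2(2) by (intro continuous_intros)
    show "((\<lambda>x. Sol a b lam eps k1 x - Sol a b lam eps k2 x) has_real_derivative SolD a b lam eps k1 x - SolD a b lam eps k2 x) (at x)"
      if "x \<in> {a<..<b}" for x
      using F1(4)[OF that] F2(4)[OF that] by (intro derivative_intros)
    show "((\<lambda>x. SolD a b lam eps k1 x - SolD a b lam eps k2 x) has_real_derivative
        (lam^2 * Sol a b lam eps k1 x - k1 x / eps) - (lam^2 * Sol a b lam eps k2 x - k2 x / eps)) (at x)"
      if "x \<in> {a<..<b}" for x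
      using F1(5)[OF that] F2(5)[OF that] by (intro derivative_intros)
    show "(lam^2 * Sol a b lam eps k1 x - k1 x / eps) - (lam^2 * Sol a b lam eps k2 x - k2 x / eps) > 0"
      if "x \<in> {a<..<b}" "Sol a b lam eps k1 x - Sol a b lam eps k2 x > 0" for x
    proof -
      have "lam^2 * (Sol a b lam eps k1 x - Sol a b lam eps k2 x) > 0" using that(2) lp by simp
      moreover have "k1 x / eps \<le> k2 x / eps" using kp[of x] that(1) lp by (auto simp: divide_right_mono)
      ultimately show ?thesis by (simp add: algebra_simps)
    qed
    show "Sol a b lam eps k1 a - Sol a b lam eps k2 a \<le> 0" using F1(6) F2(6) by simp
    show "SolD a b lam eps k1 b - SolD a b lam eps k2 b \<le> 0" using F1(7) F2(7) by simp
  qed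
  then show ?thesis by simp
qed

lemma pow_diff_le:
  fixes x y B :: real
  assumes "0 \<le> x" "x \<le> y" "y \<le> B"
  shows "y^n - x^n \<le> real n * B^(n-1) * (y - x)"
proof -
  have "y^n - x^n = (y - x) * (\<Sum>i<n. x ^ (n - Suc i) * y ^ i)"
    by (rule power_diff_sumr2)
  also have "(\<Sum>i<n. x ^ (n - Suc i) * y ^ i) \<le> (\<Sum>i<n. B^(n-1))"
  proof (rule sum_mono)
    fix i assume i: "i \<in> {..<n}"
    have "x ^ (n - Suc i) * y ^ i \<le> B ^ (n - Suc i) * B ^ i"
      using assms by (intro mult_mono power_mono) auto
    also have "\<dots> = B^(n-1)" using i by (simp add: power_add[symmetric])
    finally show "x ^ (n - Suc i) * y ^ i \<le> B^(n-1)" .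
  qed
  then have "(y - x) * (\<Sum>i<n. x ^ (n - Suc i) * y ^ i) \<le> (y - x) * (real n * B^(n-1))"
    using assms by (intro mult_left_mono) auto
  finally show ?thesis by (simp add: algebra_simps)
qed

lemma G_mono:
  fixes x y B q qM mu :: real
  assumes "0 \<le> x" "x \<le> y" "y \<le> B" "0 \<le> q" "q \<le> qM" "real n * qM * B^(n-1) \<le> mu"
  shows "mu * x - q * x^n \<le> mu * y - q * y^n"
proof -
  have B: "0 \<le> B" using assms by linarith
  have "q * (y^n - x^n) \<le> qM * (real n * B^(n-1) * (y - x))"
    using pow_diff_le[OF assms(1-3), of n] assms B
    by (intro mult_mono) (auto simp: power_mono)
  also have "\<dots> = (real n * qM * B^(n-1)) * (y - x)" by simp
  also have "\<dots> \<le> mu * (y - x)" using assms by (intro mult_right_mono) auto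
  finally show ?thesis by (simp add: algebra_simps)
qed

lemma super_cmp:
  fixes q l Z Z' Z'' g k :: "real \<Rightarrow> real"
  assumes ab: "a < b" and lp: "lam > 0" "eps > 0" and mu: "mu = eps * lam^2"
   and qc: "continuous_on {a..b} q" and lc: "continuous_on {a..b} l" and gc: "continuous_on {a..b} g"
   and qp: "\<And>x. x\<in>{a..b} \<Longrightarrow> q x > 0" and qM: "\<And>x. x\<in>{a..b} \<Longrightarrow> q x \<le> qM"
   and Zc: "continuous_on {a..b} Z" and Z'c: "continuous_on {a..b} Z'"
   and Zd: "\<And>x. x\<in>{a<..<b} \<Longrightarrow> (Z has_real_derivative Z' x) (at x)"
   and Z'd: "\<And>x. x\<in>{a<..<b} \<Longrightarrow> (Z' has_real_derivative Z'' x) (at x)"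
   and Zs: "\<And>x. x\<in>{a<..<b} \<Longrightarrow> -eps * Z'' x + q x * Z x ^ n \<ge> l x"
   and Zb: "Z' b \<ge> eps" and Za: "Z a \<ge> 0"
   and gZ: "\<And>x. x\<in>{a..b} \<Longrightarrow> 0 \<le> g x \<and> g x \<le> Z x" and ZB: "\<And>x. x\<in>{a..b} \<Longrightarrow> Z x \<le> B"
   and muB: "real n * qM * B^(n-1) \<le> mu"
   and kdef: "k = (\<lambda>x. l x + mu * g x - q x * g x ^ n)"
   and x: "x \<in> {a..b}"
  shows "Sol a b lam eps k x \<le> Z x"
proof -
  have kc: "continuous_on {a..b} k" unfolding kdef using lc gc qc by (intro continuous_intros)
  note F = sol_facts[OF ab kc lp]
  let ?S = "Sol a b lam eps k" and ?D = "SolD a b lam eps k"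
  have "?S x - Z x \<le> 0"
  proof (rule maxp[OF ab _ _ _ _ _ _ _ x, where u' = "\<lambda>x. ?D x - Z' x"
        and u'' = "\<lambda>x. (lam^2 * ?S x - k x / eps) - Z'' x"])
    show "continuous_on {a..b} (\<lambda>x. ?S x - Z x)" using F(1) Zc by (intro continuous_intros)
    show "continuous_on {a..b} (\<lambda>x. ?D x - Z' x)" using F(2) Z'c by (intro continuous_intros)
    show "((\<lambda>x. ?S x - Z x) has_real_derivative ?D x - Z' x) (at x)" if "x \<in> {a<..<b}" for x
      using F(4)[OF that] Zd[OF that] by (intro derivative_intros)
    show "((\<lambda>x. ?D x - Z' x) has_real_derivative (lam^2 * ?S x - k x / eps) - Z'' x) (at x)" if "x \<in> {a<..<b}" for x
      using F(5)[OF that] Z'd[OF that] by (intro derivative_intros)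
    show "(lam^2 * ?S x - k x / eps) - Z'' x > 0" if xx: "x \<in> {a<..<b}" "?S x - Z x > 0" for x
    proof -
      have xab: "x \<in> {a..b}" using xx by auto
      have G: "mu * g x - q x * g x ^ n \<le> mu * Z x - q x * Z x ^ n"
        using G_mono[of "g x" "Z x" B "q x" qM n mu] gZ[OF xab] ZB[OF xab] qp[OF xab] qM[OF xab] muB by auto
      have "eps * ((lam^2 * ?S x - k x / eps) - Z'' x) = mu * ?S x - k x - eps * Z'' x"
        using lp mu by (simp add: field_simps)
      also have "\<dots> \<ge> mu * ?S x - k x + l x - q x * Z x ^ n" using Zs[OF xx(1)] by linarith
      also have "mu * ?S x - k x + l x - q x * Z x ^ n = mu * (?S x - Z x) + ((mu * Z x - q x * Z x ^ n) - (mu * g x - q x * g x ^ n))"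
        unfolding kdef by (simp add: algebra_simps)
      finally have "eps * ((lam^2 * ?S x - k x / eps) - Z'' x) \<ge> mu * (?S x - Z x)" using G by linarith
      moreover have "mu * (?S x - Z x) > 0" using xx(2) lp mu by simp
      ultimately have "eps * ((lam^2 * ?S x - k x / eps) - Z'' x) > 0" by linarith
      then show ?thesis using lp by (simp add: zero_less_mult_iff)
    qed
    show "?S a - Z a \<le> 0" using F(6) Za by simp
    show "?D b - Z' b \<le> 0" using F(7) Zb by simp
  qed
  then show ?thesis by simp
qed

lemma core:
  fixes a b eps :: real and n :: nat and q l Z Z' Z'' :: "real \<Rightarrow> real"
  assumes ab: "a < b" and ep: "eps > 0" and n0: "n > 0"
   and qc: "continuous_on {a..b} q" and lc: "continuous_on {a..b} l"
   and qp: "\<And>x. x\<in>{a..b} \<Longrightarrow> q x > 0" and lp: "\<And>x. x \<in> {a..b} \<Longrightarrow> l x \<ge> 0"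
   and Zc: "continuous_on {a..b} Z" and Z'c: "continuous_on {a..b} Z'"
   and Zd: "\<And>x. x\<in>{a<..<b} \<Longrightarrow> (Z has_real_derivative Z' x) (at x)"
   and Z'd: "\<And>x. x\<in>{a<..<b} \<Longrightarrow> (Z' has_real_derivative Z'' x) (at x)"
   and Zp: "\<And>x. x\<in>{a..b} \<Longrightarrow> Z x \<ge> 0"
   and Zs: "\<And>x. x\<in>{a<..<b} \<Longrightarrow> -eps * Z'' x + q x * Z x ^ n \<ge> l x"
   and Zb: "Z' b \<ge> eps"
  shows "\<exists>y y'. continuous_on {a..b} y \<and> continuous_on {a..b} y' \<and>
     (\<forall>x\<in>{a..b}. (y has_real_derivative y' x) (at x within {a..b})) \<and>
     (\<forall>x\<in>{a<..<b}. (y has_real_derivative y' x) (at x)) \<and>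
     (\<forall>x\<in>{a<..<b}. (y' has_real_derivative (q x * y x ^ n - l x)/eps) (at x)) \<and>
     y a = 0 \<and> y' b = eps \<and> (\<forall>x\<in>{a..b}. 0 \<le> y x \<and> y x \<le> Z x)"
proof -
  have ne: "{a..b} \<noteq> {}" using ab by auto
  obtain x1 where x1: "x1 \<in> {a..b}" "\<And>x. x \<in> {a..b} \<Longrightarrow> Z x \<le> Z x1"
    using continuous_attains_sup[OF compact_Icc ne Zc] by blast
  define B where "B = Z x1"
  have ZB: "\<And>x. x \<in> {a..b} \<Longrightarrow> Z x \<le> B" using x1 by (simp add: B_def)
  have B0: "B \<ge> 0" using Zp[OF x1(1)] by (simp add: B_def)
  obtain x2 where x2: "x2 \<in> {a..b}" "\<And>x. x \<in> {a..b} \<Longrightarrow> q x \<le> q x2"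
    using continuous_attains_sup[OF compact_Icc ne qc] by blast
  define qM where "qM = q x2"
  have qM: "\<And>x. x \<in> {a..b} \<Longrightarrow> q x \<le> qM" using x2 by (simp add: qM_def)
  have qM0: "qM > 0" using qp[OF x2(1)] by (simp add: qM_def)
  obtain x3 where x3: "x3 \<in> {a..b}" "\<And>x. x \<in> {a..b} \<Longrightarrow> l x \<le> l x3"
    using continuous_attains_sup[OF compact_Icc ne lc] by blast
  define lM where "lM = l x3"
  have lM: "\<And>x. x \<in> {a..b} \<Longrightarrow> l x \<le> lM" using x3 by (simp add: lM_def)
  define mu where "mu = real n * qM * B^(n-1) + 1"
  have mu0: "mu > 0" unfolding mu_def using qM0 B0 by (simp add: add_nonneg_pos)
  define lam where "lam = sqrt (mu / eps)"
  have lam0: "lam > 0" unfolding lam_def using mu0 ep by simp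
  have mu_eq: "mu = eps * lam^2" unfolding lam_def using mu0 ep by simp
  have muB: "real n * qM * B^(n-1) \<le> mu" unfolding mu_def by simp
  define F where "F = (\<lambda>g x. l x + mu * g x - q x * g x ^ n)"
  define u where "u = rec_nat (\<lambda>x. 0::real) (\<lambda>j uj. Sol a b lam eps (F uj))"
  have u0: "u 0 = (\<lambda>x. 0)" unfolding u_def by simp
  have uS: "u (Suc j) = Sol a b lam eps (F (u j))" for j unfolding u_def by simp
  have Fc: "continuous_on {a..b} (F g)" if "continuous_on {a..b} g" for g
    unfolding F_def using that lc qc by (intro continuous_intros)
  have Fmono: "F g1 x \<le> F g2 x" if "x \<in> {a..b}" "0 \<le> g1 x" "g1 x \<le> g2 x" "g2 x \<le> B" for g1 g2 x
    using G_mono[of "g1 x" "g2 x" B "q x" qM n mu] that qp[OF that(1)] qM[OF that(1)] muB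
    unfolding F_def by auto
  have sup: "Sol a b lam eps (F g) x \<le> Z x" if "continuous_on {a..b} g"
      "\<And>x. x\<in>{a..b} \<Longrightarrow> 0 \<le> g x \<and> g x \<le> Z x" "x \<in> {a..b}" for g x
    by (rule super_cmp[OF ab lam0 ep mu_eq qc lc that(1) qp qM Zc Z'c Zd Z'd Zs Zb Zp[of a] that(2) ZB muB _ that(3)])
       (use ab in \<open>auto simp: F_def\<close>)
  have Q: "continuous_on {a..b} (u j) \<and> continuous_on {a..b} (u (Suc j)) \<and>
      (\<forall>x\<in>{a..b}. 0 \<le> u j x \<and> u j x \<le> u (Suc j) x \<and> u (Suc j) x \<le> Z x)" for j
  proof (induction j)
    case 0
    have c0: "continuous_on {a..b} (u 0)" unfolding u0 by simp
    have c1: "continuous_on {a..b} (u (Suc 0))" unfolding uS using sol_facts(1)[OF ab Fc[OF c0] lam0 ep] .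
    have "0 \<le> u (Suc 0) x" if "x \<in> {a..b}" for x
      unfolding uS by (rule Sol_nonneg[OF ab Fc[OF c0] lam0 ep _ that]) (use n0 in \<open>auto simp: u0 F_def lp zero_power\<close>)
    moreover have "u (Suc 0) x \<le> Z x" if "x \<in> {a..b}" for x
      unfolding uS by (rule sup[OF c0 _ that]) (auto simp: u0 Zp)
    ultimately show ?case using c0 c1 by (auto simp: u0)
  next
    case (Suc j)
    then have cj: "continuous_on {a..b} (u j)" and cj1: "continuous_on {a..b} (u (Suc j))"
      and bj: "\<And>x. x\<in>{a..b} \<Longrightarrow> 0 \<le> u j x \<and> u j x \<le> u (Suc j) x \<and> u (Suc j) x \<le> Z x" by auto
    have c2: "continuous_on {a..b} (u (Suc (Suc j)))" unfolding uS[of "Suc j"] using sol_facts(1)[OF ab Fc[OF cj1] lam0 ep] .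
    have m: "u (Suc j) x \<le> u (Suc (Suc j)) x" if "x \<in> {a..b}" for x
    proof -
      have "Sol a b lam eps (F (u j)) x \<le> Sol a b lam eps (F (u (Suc j))) x"
        by (rule Sol_mono[OF ab Fc[OF cj] Fc[OF cj1] lam0 ep _ that])
           (use bj ZB in \<open>auto intro!: Fmono dest: order_trans\<close>)
      then show ?thesis by (simp only: uS)
    qed
    have z: "u (Suc (Suc j)) x \<le> Z x" if "x \<in> {a..b}" for x
      unfolding uS[of "Suc j"] by (rule sup[OF cj1 _ that]) (use bj in force)
    show ?case using cj1 c2 m z bj by force
  qed
  have inc: "incseq (\<lambda>j. u j x)" if "x \<in> {a..b}" for x
    using Q that by (intro incseq_SucI) auto
  have bdd: "u j x \<le> Z x" if "x \<in> {a..b}" for x j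
    using Q[of j] inc[OF that] that by (meson incseqD le_SucE order_trans order.refl) 
  define U where "U x = (SUP j. u j x)" for x
  have Ulim: "(\<lambda>j. u j x) \<longlonglongrightarrow> U x" if "x \<in> {a..b}" for x
    unfolding U_def using inc[OF that] bdd[OF that] by (intro LIMSEQ_incseq_SUP) (auto intro!: bdd_aboveI)
  have uU: "u j x \<le> U x" if "x \<in> {a..b}" for x j
    unfolding U_def using bdd[OF that] by (intro cSUP_upper) (auto intro!: bdd_aboveI)
  have UZ: "U x \<le> Z x" if "x \<in> {a..b}" for x
    unfolding U_def using bdd[OF that] by (intro cSUP_least) auto
  have u0p: "0 \<le> u j x" if "x \<in> {a..b}" for x j using Q[of j] that by auto
  define M where "M = lM + mu * B + qM * B^n"
  have Fb: "\<bar>F (u j) x\<bar> \<le> M" if "x \<in> {a..b}" for j x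
  proof -
    have h: "0 \<le> u j x" "u j x \<le> B" using u0p[OF that] bdd[OF that, of j] ZB[OF that] by auto
    have "0 \<le> q x * u j x ^ n" using qp[OF that] h by simp
    moreover have "q x * u j x ^ n \<le> qM * B ^ n" using qM[OF that] qp[OF that] h
      by (intro mult_mono power_mono) auto
    moreover have "mu * u j x \<le> mu * B" using h mu0 by simp
    moreover have "0 \<le> mu * u j x" using h mu0 by simp
    ultimately show ?thesis using lp[OF that] lM[OF that] unfolding F_def M_def by (simp add: abs_le_iff)
  qed
  have Flim: "(\<lambda>j. F (u j) x) \<longlonglongrightarrow> F U x" if "x \<in> {a..b}" for x
    unfolding F_def by (intro tendsto_intros Ulim[OF that])
  have uc: "continuous_on {a..b} (F (u j))" for j using Fc Q by blast
  note D0 = Sol_dom[where k="\<lambda>j. F (u j)" and M=M and kk="F U", OF lam0 ep uc Fb Flim]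
  have D: "(\<lambda>t. sinh (lam*(t-a)) * F U t) integrable_on {a..b}"
    "(\<lambda>t. cosh (lam*(b-t)) * F U t) integrable_on {a..b}"
    "\<And>s. s \<in> {a..b} \<Longrightarrow> (\<lambda>j. Sol a b lam eps (F (u j)) s) \<longlonglongrightarrow> Sol a b lam eps (F U) s"
    by (rule D0; simp)+
  have US: "U s = Sol a b lam eps (F U) s" if "s \<in> {a..b}" for s
  proof -
    have "(\<lambda>j. u (Suc j) s) \<longlonglongrightarrow> Sol a b lam eps (F U) s" unfolding uS using D(3)[OF that] .
    moreover have "(\<lambda>j. u (Suc j) s) \<longlonglongrightarrow> U s" using Ulim[OF that] by (rule LIMSEQ_Suc)
    ultimately show ?thesis using LIMSEQ_unique by blast
  qed
  have Uc: "continuous_on {a..b} U"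
    using continuous_on_eq[OF Sol_cont(1)[OF lam0 ep D(1) D(2)], of U] US by auto
  have FUc: "continuous_on {a..b} (F U)" using Fc[OF Uc] .
  define y where "y = Sol a b lam eps (F U)"
  define y' where "y' = SolD a b lam eps (F U)"
  note S = sol_facts[OF ab FUc lam0 ep, folded y_def y'_def]
  have yU: "y x = U x" if "x \<in> {a..b}" for x using US[OF that] by (simp add: y_def)
  show ?thesis
  proof (intro exI conjI ballI)
    show "continuous_on {a..b} y" "continuous_on {a..b} y'" using S by auto
    show "(y has_real_derivative y' x) (at x within {a..b})" if "x \<in> {a..b}" for x using S(3)[OF that] .
    show "(y has_real_derivative y' x) (at x)" if "x \<in> {a<..<b}" for x using S(4)[OF that] .
    show "(y' has_real_derivative (q x * y x ^ n - l x)/eps) (at x)" if x: "x \<in> {a<..<b}" for x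
    proof -
      have "lam^2 * y x - F U x / eps = (q x * y x ^ n - l x)/eps"
        using yU[of x] x ep mu_eq unfolding F_def by (auto simp: field_simps)
      then show ?thesis using S(5)[OF x] by simp
    qed
    show "y a = 0" "y' b = eps" using S by auto
    show "0 \<le> y x" if "x \<in> {a..b}" for x using yU[OF that] uU[OF that, of 0] u0p[OF that, of 0] by simp
    show "y x \<le> Z x" if "x \<in> {a..b}" for x using yU[OF that] UZ[OF that] by simp
  qed
qed

lemma cmp:
  fixes q l y y' Z Z' Z'' :: "real \<Rightarrow> real"
  assumes ab: "a < b" and ep: "eps > 0" and n0: "n > 0"
   and qp: "\<And>x. x\<in>{a..b} \<Longrightarrow> q x > 0"
   and yc: "continuous_on {a..b} y" and y'c: "continuous_on {a..b} y'"
   and yd: "\<And>x. x\<in>{a<..<b} \<Longrightarrow> (y has_real_derivative y' x) (at x)"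
   and y'd: "\<And>x. x\<in>{a<..<b} \<Longrightarrow> (y' has_real_derivative (q x * y x ^ n - l x)/eps) (at x)"
   and yp: "\<And>x. x\<in>{a..b} \<Longrightarrow> y x \<ge> 0"
   and Zc: "continuous_on {a..b} Z" and Z'c: "continuous_on {a..b} Z'"
   and Zd: "\<And>x. x\<in>{a<..<b} \<Longrightarrow> (Z has_real_derivative Z' x) (at x)"
   and Z'd: "\<And>x. x\<in>{a<..<b} \<Longrightarrow> (Z' has_real_derivative Z'' x) (at x)"
   and Zp: "\<And>x. x\<in>{a..b} \<Longrightarrow> Z x \<ge> 0"
   and Zs: "\<And>x. x\<in>{a<..<b} \<Longrightarrow> -eps * Z'' x + q x * Z x ^ n \<ge> l x"
   and ya: "y a \<le> Z a" and yb: "y' b \<le> Z' b"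
   and x: "x \<in> {a..b}"
  shows "y x \<le> Z x"
proof -
  have "y x - Z x \<le> 0"
  proof (rule maxp[OF ab _ _ _ _ _ _ _ x, where u' = "\<lambda>x. y' x - Z' x"
        and u'' = "\<lambda>x. (q x * y x ^ n - l x)/eps - Z'' x"])
    show "continuous_on {a..b} (\<lambda>x. y x - Z x)" using yc Zc by (intro continuous_intros)
    show "continuous_on {a..b} (\<lambda>x. y' x - Z' x)" using y'c Z'c by (intro continuous_intros)
    show "((\<lambda>x. y x - Z x) has_real_derivative y' x - Z' x) (at x)" if "x \<in> {a<..<b}" for x
      using yd[OF that] Zd[OF that] by (intro derivative_intros)
    show "((\<lambda>x. y' x - Z' x) has_real_derivative (q x * y x ^ n - l x)/eps - Z'' x) (at x)" if "x \<in> {a<..<b}" for x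
      using y'd[OF that] Zd[OF that] Z'd[OF that] by (intro derivative_intros)
    show "(q x * y x ^ n - l x)/eps - Z'' x > 0" if xx: "x \<in> {a<..<b}" "y x - Z x > 0" for x
    proof -
      have xab: "x \<in> {a..b}" using xx by auto
      have "Z x ^ n < y x ^ n" using xx(2) Zp[OF xab] n0 by (intro power_strict_mono) auto
      then have "q x * Z x ^ n < q x * y x ^ n" using qp[OF xab] by simp
      moreover have "eps * ((q x * y x ^ n - l x)/eps - Z'' x) = q x * y x ^ n - l x - eps * Z'' x"
        using ep by (simp add: field_simps)
      ultimately have "eps * ((q x * y x ^ n - l x)/eps - Z'' x) > 0"
        using Zs[OF xx(1)] by linarith
      then show ?thesis using ep by (simp add: zero_less_mult_iff)
    qed
    show "y a - Z a \<le> 0" using ya by simp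
    show "y' b - Z' b \<le> 0" using yb by simp
  qed
  then show ?thesis by simp
qed

definition rho :: "nat \<Rightarrow> real \<Rightarrow> real" where "rho n s = root n (real n * s)"
definition qq :: "nat \<Rightarrow> real \<Rightarrow> real" where
  "qq n s = 1 / (real n * rho n s ^ (n*(n-1) + 2*(n-1)))"
definition ll :: "nat \<Rightarrow> (real \<Rightarrow> real) \<Rightarrow> real \<Rightarrow> real" where
  "ll n L s = L (rho n s) / rho n s ^ (2*(n-1))"
definition al :: "nat \<Rightarrow> real" where "al n = real (n-1) / real n"
definition Yf :: "nat \<Rightarrow> real \<Rightarrow> real \<Rightarrow> real \<Rightarrow> real" where
  "Yf n e K s = e * s powr al n + K * s"
definition Yf' :: "nat \<Rightarrow> real \<Rightarrow> real \<Rightarrow> real \<Rightarrow> real" where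
  "Yf' n e K s = e * al n * s powr (al n - 1) + K"
definition Yf'' :: "nat \<Rightarrow> real \<Rightarrow> real \<Rightarrow> real" where
  "Yf'' n e s = e * al n * (al n - 1) * s powr (al n - 2)"

lemma rho_pos: "n > 0 \<Longrightarrow> s > 0 \<Longrightarrow> rho n s > 0"
  unfolding rho_def by (intro real_root_gt_zero) auto

lemma rho_pow: "n > 0 \<Longrightarrow> s \<ge> 0 \<Longrightarrow> rho n s ^ n = real n * s"
  unfolding rho_def by simp

lemma rho_sigma: "n > 0 \<Longrightarrow> r \<ge> 0 \<Longrightarrow> rho n (r ^ n / real n) = r"
  unfolding rho_def by (simp add: real_root_power_cancel)

lemma rho_cont: "continuous_on S (rho n)"
  unfolding rho_def by (intro continuous_intros)

lemma al_bounds: "n \<ge> 2 \<Longrightarrow> 0 < al n \<and> al n < 1"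
  unfolding al_def by (auto simp: field_simps)

lemma Yf_deriv: "s > 0 \<Longrightarrow> (Yf n e K has_real_derivative Yf' n e K s) (at s)"
  unfolding Yf_def Yf'_def by (auto intro!: derivative_eq_intros)

lemma Yf'_deriv: "s > 0 \<Longrightarrow> (Yf' n e K has_real_derivative Yf'' n e s) (at s)"
  unfolding Yf'_def Yf''_def by (auto intro!: derivative_eq_intros simp: diff_diff_eq[symmetric])

lemma Yf_nonneg: "e \<ge> 0 \<Longrightarrow> K \<ge> 0 \<Longrightarrow> s \<ge> 0 \<Longrightarrow> Yf n e K s \<ge> 0"
  unfolding Yf_def by simp

lemma Yf''_nonpos: "n \<ge> 2 \<Longrightarrow> e \<ge> 0 \<Longrightarrow> Yf'' n e s \<le> 0"
proof -
  assume a: "n \<ge> 2" "e \<ge> 0"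
  have "e * al n * (al n - 1) \<le> 0" using al_bounds[OF a(1)] a(2) by (intro mult_nonneg_nonpos) auto
  then show ?thesis unfolding Yf''_def by (rule mult_nonpos_nonneg) simp
qed

lemma Yf_super:
  assumes n: "n \<ge> 2" and e: "e \<ge> 0" and K: "K \<ge> 0" and s: "s > 0"
    and c: "L (rho n s) \<le> e^n / real n ^ n \<or> real n ^ n * L (rho n s) \<le> K^n * s"
  shows "qq n s * Yf n e K s ^ n \<ge> ll n L s"
proof -
  define p where "p = n - 1"
  have np: "n = Suc p" using n by (simp add: p_def)
  define r where "r = rho n s"
  have r: "r > 0" using rho_pos[of n s] n s by (simp add: r_def)
  have rn: "r ^ n = real n * s" using rho_pow[of n s] n s by (simp add: r_def)
  have Y0: "0 \<le> e * s powr al n" "0 \<le> K * s" using e K s by auto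
  have "Yf n e K s ^ n \<ge> real n ^ n * s ^ p * L r"
    using c[folded r_def]
  proof
    assume h: "L r \<le> e^n / real n ^ n"
    have "(e * s powr al n) ^ n = e ^ n * s ^ p"
      using s n unfolding al_def
      by (simp add: power_mult_distrib powr_realpow[symmetric] powr_powr p_def of_nat_diff)
    moreover have "(e * s powr al n) ^ n \<le> Yf n e K s ^ n" unfolding Yf_def
      using Y0 by (intro power_mono) auto
    moreover have "real n ^ n * s ^ p * L r \<le> real n ^ n * s ^ p * (e^n / real n ^ n)"
      using h s by (intro mult_left_mono) auto
    moreover have "real n ^ n * s ^ p * (e^n / real n ^ n) = e ^ n * s ^ p" using n by simp
    ultimately show ?thesis by linarith
  next
    assume h: "real n ^ n * L r \<le> K ^ n * s"
    have "(K * s) ^ n = K ^ n * s * s ^ p" by (simp add: np power_mult_distrib)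
    moreover have "(K * s) ^ n \<le> Yf n e K s ^ n" unfolding Yf_def
      using Y0 by (intro power_mono) auto
    moreover have "real n ^ n * s ^ p * L r \<le> K ^ n * s * s ^ p"
      using mult_right_mono[OF h, of "s^p"] s by (simp add: algebra_simps)
    ultimately show ?thesis by simp
  qed
  moreover have "ll n L s = (real n ^ n * s ^ p * L r) * qq n s"
  proof -
    have e1: "r ^ (n * (n - 1) + 2 * (n - 1)) = (r ^ n) ^ p * r ^ (2 * p)"
      by (simp add: p_def power_add power_mult)
    have nn: "real n ^ n = real n * real n ^ p" by (simp add: np)
    have sp: "s ^ p > 0" "real n ^ p > 0" "r ^ (2*p) > 0" using s r n by auto
    have "ll n L s = L r / r ^ (2 * p)" unfolding ll_def r_def p_def by simp
    also have "\<dots> = (real n * real n ^ p * s ^ p * L r) / (real n * (real n ^ p * s ^ p) * r ^ (2 * p))"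
      using sp n s by (simp add: field_simps)
    also have "\<dots> = (real n ^ n * s ^ p * L r) * qq n s"
      unfolding qq_def r_def[symmetric] e1 rn nn power_mult_distrib by simp
    finally show ?thesis .
  qed
  moreover have "qq n s > 0" unfolding qq_def using r n by (simp add: r_def)
  ultimately show ?thesis by (simp add: mult.commute mult_right_mono)
qed

lemma L_props:
  fixes f :: "real \<Rightarrow> real"
  assumes n: "n \<ge> 2" and R: "R > 0"
    and int: "set_integrable lborel {0<..<R} (\<lambda>t. t ^ (n - 1) * f t)"
    and nn: "AE t in lborel. t \<in> {0<..<R} \<longrightarrow> f t \<ge> 0"
  shows "continuous_on {0..R} (Lf n f)" "Lf n f 0 = 0" "\<And>r. r \<in> {0..R} \<Longrightarrow> Lf n f r \<ge> 0"
proof -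
  define g where "g = (\<lambda>t::real. t ^ (n - 1) * f t)"
  have g0: "g 0 = 0" using n by (simp add: g_def)
  have si: "set_integrable lborel {0..r} g" if r: "0 \<le> r" "r \<le> R" for r
  proof -
    have a: "set_integrable lborel {0<..<r} g"
      by (rule set_integrable_subset[OF int[folded g_def]]) (use r in auto)
    have b: "set_integrable lborel {c} g" for c
    proof -
      have "integrable lborel (\<lambda>x. indicator {c} x *\<^sub>R g c)"
        by (rule integrable_indicator) auto
      moreover have "(\<lambda>x. indicator {c} x *\<^sub>R g c) = (\<lambda>x. indicator {c} x *\<^sub>R g x)"
        by (auto simp: indicator_def)
      ultimately show ?thesis unfolding set_integrable_def by metis
    qed
    have "{0..r} = ({0<..<r} \<union> {0}) \<union> {r}" using r by auto
    then show ?thesis using set_integrable_Un[OF set_integrable_Un[OF a b] b] by auto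
  qed
  have eq: "Lf n f r = integral {0..r} g" if "0 \<le> r" "r \<le> R" for r
    unfolding Lf_def g_def[symmetric] using set_borel_integral_eq_integral(2)[OF si[OF that]] .
  have gi: "g integrable_on {0..R}" using set_borel_integral_eq_integral(1)[OF si] R by auto
  show "continuous_on {0..R} (Lf n f)"
    using continuous_on_eq[OF indefinite_integral_continuous_1[OF gi]] eq by auto
  show "Lf n f 0 = 0" using eq[of 0] R by simp
  fix r assume r: "r \<in> {0..R}"
  have "AE t in lborel. 0 \<le> indicator {0..r} t *\<^sub>R g t"
    using nn AE_lborel_singleton[of R]
  proof eventually_elim
    case (elim t)
    show ?case
    proof (cases "t \<in> {0..r}")
      case True
      then show ?thesis
      proof (cases "t = 0")
        case False
        then have "t \<in> {0<..<R}" using True r elim(2) by auto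
        then show ?thesis using elim(1) True by (auto simp: g_def)
      qed (simp add: g0)
    qed simp
  qed
  then show "Lf n f r \<ge> 0" unfolding Lf_def g_def[symmetric] set_lebesgue_integral_def
    by (rule integral_nonneg_AE)
qed

lemma Yf_props:
  assumes n: "n \<ge> 2" and a: "a > 0" and e: "e \<ge> 0" and K: "K \<ge> 0"
  shows "continuous_on {a..b} (Yf n e K)" "continuous_on {a..b} (Yf' n e K)"
    "\<And>x. x \<in> {a<..<b} \<Longrightarrow> (Yf n e K has_real_derivative Yf' n e K x) (at x)"
    "\<And>x. x \<in> {a<..<b} \<Longrightarrow> (Yf' n e K has_real_derivative Yf'' n e x) (at x)"
    "\<And>x. x \<in> {a..b} \<Longrightarrow> Yf n e K x \<ge> 0"
    "\<And>x. Yf'' n e x \<le> 0"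
    "Yf' n e K b \<ge> K"
proof -
  show "continuous_on {a..b} (Yf n e K)" using a
    by (intro continuous_at_imp_continuous_on ballI DERIV_continuous[OF Yf_deriv]) auto
  show "continuous_on {a..b} (Yf' n e K)" using a
    by (intro continuous_at_imp_continuous_on ballI DERIV_continuous[OF Yf'_deriv]) auto
  show "\<And>x. x \<in> {a<..<b} \<Longrightarrow> (Yf n e K has_real_derivative Yf' n e K x) (at x)"
    using a by (intro Yf_deriv) auto
  show "\<And>x. x \<in> {a<..<b} \<Longrightarrow> (Yf' n e K has_real_derivative Yf'' n e x) (at x)"
    using a by (intro Yf'_deriv) auto
  show "\<And>x. x \<in> {a..b} \<Longrightarrow> Yf n e K x \<ge> 0" using a e K by (intro Yf_nonneg) auto
  show "\<And>x. Yf'' n e x \<le> 0" using Yf''_nonpos[OF n e] .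
  show "Yf' n e K b \<ge> K" unfolding Yf'_def using al_bounds[OF n] e by simp
qed

lemma Yf_mono: "n \<ge> 2 \<Longrightarrow> e \<ge> 0 \<Longrightarrow> K \<ge> 0 \<Longrightarrow> 0 \<le> s \<Longrightarrow> s \<le> t \<Longrightarrow> Yf n e K s \<le> Yf n e K t"
  unfolding Yf_def using al_bounds[of n]
  by (intro add_mono mult_left_mono powr_mono2) auto

lemma approx_seq:
  fixes q l :: "real \<Rightarrow> real"
  assumes n: "n \<ge> 2" and b: "b > 0" and ep: "eps > 0"
    and qc: "continuous_on {0<..b} q" and lc: "continuous_on {0<..b} l"
    and qp: "\<And>s. s \<in> {0<..b} \<Longrightarrow> q s > 0" and lp: "\<And>s. s \<in> {0<..b} \<Longrightarrow> l s \<ge> 0"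
    and sup: "\<And>e. e > 0 \<Longrightarrow> \<exists>K. K \<ge> eps \<and> (\<forall>s\<in>{0<..b}. q s * Yf n e K s ^ n \<ge> l s)"
    and a: "0 < a" "a < b"
  shows "\<exists>y y'. continuous_on {a..b} y \<and> continuous_on {a..b} y' \<and>
     (\<forall>x\<in>{a<..<b}. (y has_real_derivative y' x) (at x)) \<and>
     (\<forall>x\<in>{a<..<b}. (y' has_real_derivative (q x * y x ^ n - l x)/eps) (at x)) \<and>
     y a = 0 \<and> y' b = eps \<and> (\<forall>x\<in>{a..b}. 0 \<le> y x)"
proof -
  obtain K where K: "K \<ge> eps" "\<forall>s\<in>{0<..b}. q s * Yf n 1 K s ^ n \<ge> l s" using sup[of 1] by auto
  have K0: "K \<ge> 0" using K ep by linarith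
  note Y = Yf_props[OF n a(1) zero_le_one K0]
  have sub: "{a..b} \<subseteq> {0<..b}" using a by auto
  have "\<exists>y y'. continuous_on {a..b} y \<and> continuous_on {a..b} y' \<and>
     (\<forall>x\<in>{a..b}. (y has_real_derivative y' x) (at x within {a..b})) \<and>
     (\<forall>x\<in>{a<..<b}. (y has_real_derivative y' x) (at x)) \<and>
     (\<forall>x\<in>{a<..<b}. (y' has_real_derivative (q x * y x ^ n - l x)/eps) (at x)) \<and>
     y a = 0 \<and> y' b = eps \<and> (\<forall>x\<in>{a..b}. 0 \<le> y x \<and> y x \<le> Yf n 1 K x)"
  proof (rule core[OF a(2) ep _ continuous_on_subset[OF qc sub] continuous_on_subset[OF lc sub] _ _ Y(1) Y(2) Y(3) Y(4) Y(5)])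
    show "0 < n" using n by simp
    show "\<And>x. x \<in> {a..b} \<Longrightarrow> 0 < q x" using qp sub by auto
    show "\<And>x. x \<in> {a..b} \<Longrightarrow> 0 \<le> l x" using lp sub by auto
    show "l x \<le> - eps * Yf'' n 1 x + q x * Yf n 1 K x ^ n" if "x \<in> {a<..<b}" for x
    proof -
      have "l x \<le> q x * Yf n 1 K x ^ n" using K(2) that a by auto
      moreover have "eps * Yf'' n 1 x \<le> 0" using Y(6)[of x] ep by (simp add: mult_nonneg_nonpos)
      ultimately show ?thesis by simp
    qed
    show "eps \<le> Yf' n 1 K b" using Y(7)[of b] K by simp
  qed auto
  then show ?thesis by blast
qed

lemma limit_solution:
  fixes q l :: "real \<Rightarrow> real"
  assumes n: "n \<ge> 2" and b: "b > 0" and ep: "eps > 0"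
    and qc: "continuous_on {0<..b} q" and lc: "continuous_on {0<..b} l"
    and qp: "\<And>s. s \<in> {0<..b} \<Longrightarrow> q s > 0" and lp: "\<And>s. s \<in> {0<..b} \<Longrightarrow> l s \<ge> 0"
    and sup: "\<And>e. e > 0 \<Longrightarrow> \<exists>K. K \<ge> eps \<and> (\<forall>s\<in>{0<..b}. q s * Yf n e K s ^ n \<ge> l s)"
  shows "\<exists>W G. W 0 = 0 \<and> (\<forall>s\<in>{0..b}. W s \<ge> 0) \<and> (\<forall>e>0. \<exists>K. \<forall>s\<in>{0<..b}. W s \<le> Yf n e K s)
     \<and> (\<forall>s\<in>{0<..b}. (W has_real_derivative G s) (at s within {0..b}))
     \<and> (\<forall>s\<in>{0<..<b}. (W has_real_derivative G s) (at s))
     \<and> (\<forall>s\<in>{0<..<b}. (G has_real_derivative (q s * W s ^ n - l s)/eps) (at s))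
     \<and> G b = eps"
proof -
  define aa where "aa m = b / (real m + 2)" for m :: nat
  have aa0: "0 < aa m" for m using b by (simp add: aa_def)
  have aab: "aa m < b" for m using b by (simp add: aa_def field_simps add_pos_nonneg)
  have aamono: "aa m \<le> aa k" if "k \<le> m" for k m
    unfolding aa_def using b that by (intro divide_left_mono) auto
  have aaSuc: "aa (Suc m) \<le> aa m" for m using aamono[of m "Suc m"] by simp
  have aasmall: "\<exists>N. aa N < s" if "s > 0" for s
  proof -
    obtain N :: nat where N: "b / s < real N" using reals_Archimedean2 by blast
    have "b < real N * s" using N that by (simp add: field_simps)
    then have "b < (real N + 2) * s" using that by (simp add: algebra_simps)
    then have "aa N < s" unfolding aa_def using that by (simp add: field_simps)
    then show ?thesis by blast
  qed
  define P where "P = (\<lambda>a (y::real\<Rightarrow>real) (y'::real\<Rightarrow>real). continuous_on {a..b} y \<and> continuous_on {a..b} y' \<and>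
     (\<forall>x\<in>{a<..<b}. (y has_real_derivative y' x) (at x)) \<and>
     (\<forall>x\<in>{a<..<b}. (y' has_real_derivative (q x * y x ^ n - l x)/eps) (at x)) \<and>
     y a = 0 \<and> y' b = eps \<and> (\<forall>x\<in>{a..b}. 0 \<le> y x))"
  have "\<forall>m. \<exists>yy. P (aa m) (fst yy) (snd yy)"
  proof
    fix m
    obtain y y' where "P (aa m) y y'"
      using approx_seq[OF n b ep qc lc qp lp sup aa0 aab] unfolding P_def by blast
    then show "\<exists>yy. P (aa m) (fst yy) (snd yy)" by (intro exI[of _ "(y, y')"]) simp
  qed
  then obtain YY where YY: "\<And>m. P (aa m) (fst (YY m)) (snd (YY m))" by (metis choice)
  define Y where "Y m = fst (YY m)" for m
  define Y' where "Y' m = snd (YY m)" for m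
  have Yc: "continuous_on {aa m..b} (Y m)" and Y'c: "continuous_on {aa m..b} (Y' m)"
    and Yd: "\<And>x. x\<in>{aa m<..<b} \<Longrightarrow> (Y m has_real_derivative Y' m x) (at x)"
    and Y'd: "\<And>x. x\<in>{aa m<..<b} \<Longrightarrow> (Y' m has_real_derivative (q x * Y m x ^ n - l x)/eps) (at x)"
    and Ya: "Y m (aa m) = 0" and Yb: "Y' m b = eps" and Yp: "\<And>x. x\<in>{aa m..b} \<Longrightarrow> 0 \<le> Y m x" for m
    using YY[of m] unfolding P_def Y_def Y'_def by auto
  have n0: "n > 0" using n by simp
  have qp': "\<And>x. x \<in> {aa m..b} \<Longrightarrow> q x > 0" for m using qp aa0[of m] by auto
  have c1: "Y m s \<le> Y (Suc m) s" if s: "s \<in> {aa m..b}" for m s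
  proof (rule cmp[OF _ ep n0 qp' Yc Y'c Yd Y'd Yp _ _ _ _ _ _ _ _ s, where Z'' = "\<lambda>x. (q x * Y (Suc m) x ^ n - l x)/eps"])
    have sub: "{aa m..b} \<subseteq> {aa (Suc m)..b}" using aaSuc[of m] by auto
    show "aa m < b" by (rule aab)
    show "continuous_on {aa m..b} (Y (Suc m))" using continuous_on_subset[OF Yc sub] .
    show "continuous_on {aa m..b} (Y' (Suc m))" using continuous_on_subset[OF Y'c sub] .
    show "(Y (Suc m) has_real_derivative Y' (Suc m) x) (at x)" if "x \<in> {aa m<..<b}" for x
      using Yd[of x "Suc m"] that aaSuc[of m] by auto
    show "(Y' (Suc m) has_real_derivative (q x * Y (Suc m) x ^ n - l x)/eps) (at x)" if "x \<in> {aa m<..<b}" for x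
      using Y'd[of x "Suc m"] that aaSuc[of m] by auto
    show "0 \<le> Y (Suc m) x" if "x \<in> {aa m..b}" for x using Yp[of x "Suc m"] that aaSuc[of m] by auto
    show "l x \<le> - eps * ((q x * Y (Suc m) x ^ n - l x)/eps) + q x * Y (Suc m) x ^ n" for x
      using ep by simp
    show "Y m (aa m) \<le> Y (Suc m) (aa m)" using Ya[of m] Yp[of "aa m" "Suc m"] aaSuc[of m] aab[of m] by auto
    show "Y' m b \<le> Y' (Suc m) b" using Yb by simp
  qed
  have c2: "\<exists>K. K \<ge> 0 \<and> (\<forall>m. \<forall>s\<in>{aa m..b}. Y m s \<le> Yf n e K s)" if e: "e > 0" for e
  proof -
    obtain K where K: "K \<ge> eps" "\<forall>s\<in>{0<..b}. q s * Yf n e K s ^ n \<ge> l s" using sup[OF e] by auto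
    have K0: "K \<ge> 0" using K ep by linarith
    have "Y m s \<le> Yf n e K s" if s: "s \<in> {aa m..b}" for m s
    proof -
      note Z = Yf_props[OF n aa0[of m] less_imp_le[OF e] K0]
      show ?thesis
      proof (rule cmp[OF aab ep n0 qp' Yc Y'c Yd Y'd Yp Z(1) Z(2) Z(3) Z(4) Z(5) _ _ _ s])
        show "l x \<le> - eps * Yf'' n e x + q x * Yf n e K x ^ n" if "x \<in> {aa m<..<b}" for x
        proof -
          have "l x \<le> q x * Yf n e K x ^ n" using K(2) that aa0[of m] by auto
          moreover have "eps * Yf'' n e x \<le> 0" using Z(6)[of x] ep by (simp add: mult_nonneg_nonpos)
          ultimately show ?thesis by simp
        qed
        show "Y m (aa m) \<le> Yf n e K (aa m)" using Ya[of m] Z(5)[of "aa m"] aab[of m] by auto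
        show "Y' m b \<le> Yf' n e K b" using Yb[of m] Z(7)[of b] K by simp
      qed
    qed
    then show ?thesis using K0 by blast
  qed
  obtain K1 where K1: "K1 \<ge> 0" "\<And>m s. s\<in>{aa m..b} \<Longrightarrow> Y m s \<le> Yf n 1 K1 s" using c2[of 1] by auto
  define B1 where "B1 = Yf n 1 K1 b"
  define Yx where "Yx m s = (if s < aa m then 0 else Y m s)" for m s
  have Yx_mono: "Yx m s \<le> Yx (Suc m) s" if "s \<in> {0..b}" for m s
    using c1[of s m] Yp[of s "Suc m"] aaSuc[of m] that unfolding Yx_def by auto
  have Yx_nn: "0 \<le> Yx m s" if "s \<in> {0..b}" for m s
    using Yp[of s m] that unfolding Yx_def by auto
  have Yx_B: "Yx m s \<le> B1" if "s \<in> {0..b}" for m s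
  proof (cases "s < aa m")
    case True
    then show ?thesis unfolding Yx_def B1_def using Yf_nonneg[of 1 K1 b] K1 b by auto
  next
    case False
    then have "Y m s \<le> Yf n 1 K1 s" using K1(2)[of s m] that by auto
    also have "\<dots> \<le> B1" unfolding B1_def using Yf_mono[OF n _ K1(1), of 1 s b] that False aa0[of m] by auto
    finally show ?thesis using False unfolding Yx_def by auto
  qed
  define W where "W s = (SUP m. Yx m s)" for s
  have Wlim: "(\<lambda>m. Yx m s) \<longlonglongrightarrow> W s" if "s \<in> {0..b}" for s
    unfolding W_def using Yx_mono[OF that] Yx_B[OF that]
    by (intro LIMSEQ_incseq_SUP) (auto intro!: bdd_aboveI incseq_SucI)
  have Wnn: "W s \<ge> 0" if "s \<in> {0..b}" for s
    unfolding W_def using Yx_nn[OF that, of 0] Yx_B[OF that]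
    by (intro cSUP_upper2[where x=0]) (auto intro!: bdd_aboveI)
  have WB: "W s \<le> B1" if "s \<in> {0..b}" for s
    unfolding W_def using Yx_B[OF that] by (intro cSUP_least) auto
  have W0: "W 0 = 0" unfolding W_def Yx_def using aa0 by simp
  have Wsup: "\<exists>K. \<forall>s\<in>{0<..b}. W s \<le> Yf n e K s" if e: "e > 0" for e
  proof -
    obtain K where K: "K \<ge> 0" "\<And>m s. s\<in>{aa m..b} \<Longrightarrow> Y m s \<le> Yf n e K s" using c2[OF e] by auto
    have "W s \<le> Yf n e K s" if s: "s \<in> {0<..b}" for s
      unfolding W_def
    proof (rule cSUP_least)
      fix m show "Yx m s \<le> Yf n e K s"
        using K(2)[of s m] Yf_nonneg[of e K s] e K(1) s unfolding Yx_def by auto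
    qed simp
    then show ?thesis by blast
  qed
  define h where "h t = (q t * W t ^ n - l t)/eps" for t
  define G where "G t = eps - integral {t..b} h" for t
  define dom where "dom t = (q t * B1 ^ n + l t)/eps" for t
  have B10: "B1 \<ge> 0" using WB[of 0] Wnn[of 0] b by auto
  have key: "h integrable_on {s..b} \<and> G integrable_on {s..b} \<and> W s = W b - integral {s..b} G"
    if s: "s \<in> {0<..b}" for s
  proof -
    obtain N where N: "aa N < s" using aasmall[of s] s by auto
    have aaN: "aa (k + N) < s" for k using aamono[of N "k+N"] N by auto
    have sub: "{s..b} \<subseteq> {0<..b}" using s by auto
    have domc: "continuous_on {s..b} dom" unfolding dom_def
      using continuous_on_subset[OF qc sub] continuous_on_subset[OF lc sub] ep by (intro continuous_intros) auto
    have domi: "dom integrable_on {t..b}" if "t \<in> {s..b}" for t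
      by (rule integrable_continuous_interval) (rule continuous_on_subset[OF domc], use that in auto)
    have dom0: "dom t \<ge> 0" if "t \<in> {s..b}" for t
      using qp[of t] lp[of t] that s B10 ep unfolding dom_def by auto
    define hm where "hm k t = (q t * Y (k + N) t ^ n - l t)/eps" for k t
    have YxY: "Yx (k + N) t = Y (k + N) t" if "t \<in> {s..b}" for k t
      using aaN[of k] that unfolding Yx_def by auto
    have Ylim: "(\<lambda>k. Y (k + N) t) \<longlonglongrightarrow> W t" if "t \<in> {s..b}" for t
    proof -
      have "(\<lambda>k. Yx (k + N) t) \<longlonglongrightarrow> W t" using LIMSEQ_ignore_initial_segment[OF Wlim, of t N] that s by auto
      then show ?thesis using YxY[OF that] by simp
    qed
    have FTC1: "(hm k has_integral (eps - Y' (k + N) t)) {t..b}" if t: "t \<in> {s..b}" for k t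
    proof -
      have sub2: "{t..b} \<subseteq> {aa (k+N)..b}" using t aaN[of k] by auto
      have "(hm k has_integral (Y' (k + N) b - Y' (k + N) t)) {t..b}"
      proof (rule fundamental_theorem_of_calculus_interior)
        show "t \<le> b" using t by auto
        show "continuous_on {t..b} (Y' (k + N))" using continuous_on_subset[OF Y'c sub2] .
        show "(Y' (k + N) has_vector_derivative hm k x) (at x)" if "x \<in> {t<..<b}" for x
          using Y'd[of x "k+N"] that sub2 unfolding hm_def
          by (auto simp: has_real_derivative_iff_has_vector_derivative[symmetric])
      qed
      then show ?thesis using Yb by simp
    qed
    have hmb: "norm (hm k t) \<le> dom t" if "t \<in> {s..b}" for k t
    proof -
      have t0: "t \<in> {0<..b}" "t \<in> {aa (k+N)..b}" using that s aaN[of k] by auto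
      have y: "0 \<le> Y (k+N) t" "Y (k+N) t \<le> B1"
        using Yp[OF t0(2)] Yx_B[of t "k+N"] YxY[OF that] t0 by auto
      have "0 \<le> q t * Y (k+N) t ^ n" using qp[OF t0(1)] y by simp
      moreover have "q t * Y (k+N) t ^ n \<le> q t * B1 ^ n" using qp[OF t0(1)] y
        by (intro mult_left_mono power_mono) auto
      moreover have "0 \<le> l t" using lp[OF t0(1)] .
      ultimately have "\<bar>q t * Y (k+N) t ^ n - l t\<bar> \<le> q t * B1 ^ n + l t" by (simp add: abs_le_iff)
      then show ?thesis unfolding hm_def dom_def using ep by (simp add: divide_right_mono)
    qed
    have hmlim: "(\<lambda>k. hm k t) \<longlonglongrightarrow> h t" if "t \<in> {s..b}" for t
      unfolding hm_def h_def using ep by (intro tendsto_intros Ylim[OF that]) auto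
    have DC1: "h integrable_on {t..b} \<and> (\<lambda>k. integral {t..b} (hm k)) \<longlonglongrightarrow> integral {t..b} h"
      if t: "t \<in> {s..b}" for t
    proof -
      have st: "{t..b} \<subseteq> {s..b}" using t by auto
      have i: "hm k integrable_on {t..b}" for k using FTC1[OF t, of k] has_integral_integrable by blast
      have le: "norm (hm k x) \<le> dom x" if "x \<in> {t..b}" for k x using hmb[of x k] that st by auto
      have cv: "(\<lambda>k. hm k x) \<longlonglongrightarrow> h x" if "x \<in> {t..b}" for x using hmlim[of x] that st by auto
      show ?thesis using dominated_convergence[OF i domi[OF t] le cv] by auto
    qed
    have Y'lim: "(\<lambda>k. Y' (k + N) t) \<longlonglongrightarrow> G t" if t: "t \<in> {s..b}" for t
    proof -
      have "Y' (k + N) t = eps - integral {t..b} (hm k)" for k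
        using integral_unique[OF FTC1[OF t, of k]] by simp
      then show ?thesis unfolding G_def using DC1[OF t] by (auto intro: tendsto_intros)
    qed
    define C where "C = eps + integral {s..b} dom"
    have Y'b: "norm (Y' (k + N) t) \<le> C" if t: "t \<in> {s..b}" for k t
    proof -
      have "Y' (k + N) t = eps - integral {t..b} (hm k)"
        using integral_unique[OF FTC1[OF t, of k]] by simp
      moreover have "norm (integral {t..b} (hm k)) \<le> integral {t..b} dom"
        using Henstock_Kurzweil_Integration.integral_norm_bound_integral[of "hm k" "{t..b}" dom]
          FTC1[OF t, of k] domi[OF t] hmb t by (auto simp: has_integral_integrable)
      moreover have "integral {t..b} dom \<le> integral {s..b} dom"
        using integral_subset_le[of "{t..b}" "{s..b}" dom] domi[OF t] domi[of s] dom0 t s by auto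
      ultimately show ?thesis unfolding C_def using ep by (simp add: abs_le_iff)
    qed
    have Y'ci: "Y' (k + N) integrable_on {s..b}" for k
    proof -
      have "{s..b} \<subseteq> {aa (k+N)..b}" using aaN[of k] by auto
      then show ?thesis by (intro integrable_continuous_interval continuous_on_subset[OF Y'c])
    qed
    have DC2: "G integrable_on {s..b} \<and> (\<lambda>k. integral {s..b} (Y' (k + N))) \<longlonglongrightarrow> integral {s..b} G"
      using dominated_convergence[of "\<lambda>k. Y' (k + N)" "{s..b}" "\<lambda>_. C" G] Y'ci Y'b Y'lim by auto
    have FTC2: "Y (k + N) b - Y (k + N) s = integral {s..b} (Y' (k + N))" for k
    proof -
      have sub2: "{s..b} \<subseteq> {aa (k+N)..b}" using aaN[of k] by auto
      have "(Y' (k + N) has_integral (Y (k + N) b - Y (k + N) s)) {s..b}"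
      proof (rule fundamental_theorem_of_calculus_interior)
        show "s \<le> b" using s by auto
        show "continuous_on {s..b} (Y (k + N))" using continuous_on_subset[OF Yc sub2] .
        show "(Y (k + N) has_vector_derivative Y' (k + N) x) (at x)" if "x \<in> {s<..<b}" for x
          using Yd[of x "k+N"] that sub2
          by (auto simp: has_real_derivative_iff_has_vector_derivative[symmetric])
      qed
      then show ?thesis by (simp add: integral_unique)
    qed
    have "(\<lambda>k. Y (k + N) b - integral {s..b} (Y' (k + N))) \<longlonglongrightarrow> W b - integral {s..b} G"
      using Ylim[of b] s DC2 by (auto intro!: tendsto_intros)
    moreover have "(\<lambda>k. Y (k + N) b - integral {s..b} (Y' (k + N))) = (\<lambda>k. Y (k + N) s)"
      using FTC2 by (auto simp: algebra_simps)
    ultimately have "W s = W b - integral {s..b} G"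
      using Ylim[of s] s LIMSEQ_unique by auto
    then show ?thesis using DC1[of s] DC2 s by auto
  qed
  have reg: "(\<forall>t\<in>{s0..b}. (W has_real_derivative G t) (at t within {s0..b})) \<and>
      (\<forall>t\<in>{s0..b}. (G has_real_derivative h t) (at t within {s0..b}))" if s0: "s0 \<in> {0<..b}" for s0
  proof -
    have hi: "h integrable_on {s0..b}" and Gi: "G integrable_on {s0..b}" using key[OF s0] by auto
    have WG: "W t = W b - integral {t..b} G" if "t \<in> {s0..b}" for t using key[of t] that s0 by auto
    have sub: "{s0..b} \<subseteq> {0<..b}" using s0 by auto
    have Gc: "continuous_on {s0..b} G" unfolding G_def
      using indefinite_integral_continuous_1'[OF hi] by (intro continuous_intros)
    have c: "continuous_on {s0..b} (\<lambda>t. W b - integral {t..b} G)"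
      by (rule continuous_on_diff[OF continuous_on_const indefinite_integral_continuous_1'[OF Gi]])
    have Wc: "continuous_on {s0..b} W"
    proof (rule continuous_on_eq[OF c])
      fix x assume "x \<in> {s0..b}" then show "W b - integral {x..b} G = W x" using WG[of x] by simp
    qed
    have hc: "continuous_on {s0..b} h" unfolding h_def
      using continuous_on_subset[OF qc sub] continuous_on_subset[OF lc sub] Wc ep by (intro continuous_intros) auto
    have dW: "(W has_real_derivative G t) (at t within {s0..b})" if t: "t \<in> {s0..b}" for t
    proof -
      have "((\<lambda>t. W b - integral {t..b} G) has_real_derivative 0 - (- G t)) (at t within {s0..b})"
        by (intro derivative_intros integral_has_real_derivative'[OF Gc t])
      then have "((\<lambda>t. W b - integral {t..b} G) has_real_derivative G t) (at t within {s0..b})" by simp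
      then show ?thesis
      proof (rule has_field_derivative_transform_within[OF _ zero_less_one t])
      fix x assume "x \<in> {s0..b}" then show "W b - integral {x..b} G = W x" using WG[of x] by simp
    qed
    qed
    have dG: "(G has_real_derivative h t) (at t within {s0..b})" if t: "t \<in> {s0..b}" for t
    proof -
      have "((\<lambda>t. eps - integral {t..b} h) has_real_derivative 0 - (- h t)) (at t within {s0..b})"
        by (intro derivative_intros integral_has_real_derivative'[OF hc t])
      then show ?thesis unfolding G_def by simp
    qed
    show ?thesis using dW dG by auto
  qed
  have inner: "(W has_real_derivative G s) (at s) \<and> (G has_real_derivative h s) (at s)" if s: "s \<in> {0<..<b}" for s
  proof -
    have at: "at s within {s/2..b} = at s" using s by (intro at_within_interior) auto
    have r: "s/2 \<in> {0<..b}" "s \<in> {s/2..b}" using s by auto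
    show ?thesis using reg[OF r(1)] r(2) unfolding at[symmetric] by blast
  qed
  have atb: "at b within {0..b} = at b within {b/2..b}"
    using b by (intro at_within_nhd[of b "{b/2<..}"]) auto
  have f4: "\<forall>s\<in>{0<..b}. (W has_real_derivative G s) (at s within {0..b})"
  proof
    fix s assume s: "s \<in> {0<..b}"
    show "(W has_real_derivative G s) (at s within {0..b})"
    proof (cases "s = b")
      case True
      have r: "b/2 \<in> {0<..b}" "b \<in> {b/2..b}" using b by auto
      show ?thesis unfolding True atb using reg[OF r(1)] r(2) by blast
    next
      case False
      then show ?thesis using inner[of s] s by (auto intro: has_field_derivative_at_within)
    qed
  qed
  have f5: "\<forall>s\<in>{0<..<b}. (W has_real_derivative G s) (at s)" using inner by auto
  have f6: "\<forall>s\<in>{0<..<b}. (G has_real_derivative (q s * W s ^ n - l s)/eps) (at s)"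
    using inner by (simp add: h_def)
  have f7: "G b = eps" unfolding G_def by simp
  have f2: "\<forall>s\<in>{0..b}. W s \<ge> 0" using Wnn by auto
  have f3: "\<forall>e>0. \<exists>K. \<forall>s\<in>{0<..b}. W s \<le> Yf n e K s" using Wsup by auto
  show ?thesis using W0 f2 f3 f4 f5 f6 f7 by blast
qed

lemma zero_deriv:
  fixes w :: "real \<Rightarrow> real"
  assumes n: "n \<ge> 2" and R: "R > 0" and w0: "w 0 = 0"
    and nn: "\<And>y. y \<in> {0<..R} \<Longrightarrow> 0 \<le> w y"
    and bd: "\<And>e. e > 0 \<Longrightarrow> \<exists>K. \<forall>y\<in>{0<..R}. w y \<le> e * y^(n-1) + K * y^n"
  shows "(w has_real_derivative 0) (at 0 within {0..R})"
proof -
  define M where "M = R^(n-2) + 1"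
  have M: "M > 0" "R^(n-2) \<le> M" using R by (auto simp: M_def add_pos_nonneg)
  have pw: "y^(n-1) \<le> y * M" "y^n \<le> y * (y * M)" if y: "y \<in> {0<..R}" for y
  proof -
    have "y^(n-2) \<le> R^(n-2)" using y by (intro power_mono) auto
    then have "y^(n-2) \<le> M" using M by linarith
    moreover obtain m where m: "n = Suc (Suc m)" using n by (metis add_2_eq_Suc le_Suc_ex)
    moreover have "y^(n-1) = y * y^(n-2)" "y^n = y * (y * y^(n-2))" unfolding m by simp_all
    ultimately show "y^(n-1) \<le> y * M" "y^n \<le> y * (y * M)" using y
      by (auto intro!: mult_left_mono)
  qed
  have "((\<lambda>y. (w y - w 0) / (y - 0)) \<longlongrightarrow> 0) (at 0 within {0..R})"
  proof (rule tendstoI)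
    fix e :: real assume e: "e > 0"
    have "e/(2*M) > 0" using e M by simp
    then obtain K where K: "\<forall>y\<in>{0<..R}. w y \<le> (e / (2*M)) * y^(n-1) + K * y^n"
      using bd by blast
    define K' where "K' = \<bar>K\<bar> + 1"
    have K': "K' > 0" "K \<le> K'" by (auto simp: K'_def)
    define d where "d = e / (2 * M * K')"
    have d: "d > 0" using e M K' by (simp add: d_def)
    show "\<forall>\<^sub>F y in at 0 within {0..R}. dist ((w y - w 0) / (y - 0)) 0 < e"
      unfolding eventually_at
    proof (intro exI[of _ d] conjI d ballI impI)
      fix y assume y: "y \<in> {0..R}" "y \<noteq> 0 \<and> dist y 0 < d"
      then have y0: "y \<in> {0<..R}" "y < d" by (auto simp: dist_real_def)
      have "w y \<le> (e / (2*M)) * (y * M) + K' * (y * (y * M))"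
      proof -
        have "(e / (2*M)) * y^(n-1) \<le> (e / (2*M)) * (y * M)"
          using pw(1)[OF y0(1)] e M by (intro mult_left_mono) auto
        moreover have "K * y^n \<le> K' * (y * (y * M))"
        proof -
          have "K * y^n \<le> K' * y^n" using K' y0 by (intro mult_right_mono) auto
          also have "\<dots> \<le> K' * (y * (y * M))" using pw(2)[OF y0(1)] K' by (intro mult_left_mono) auto
          finally show ?thesis .
        qed
        ultimately show ?thesis using K y0(1) by fastforce
      qed
      also have "\<dots> = y * (e/2 + K' * M * y)" using M by (simp add: field_simps)
      also have "\<dots> < y * e"
      proof -
        have "K' * M * y < K' * M * d" using y0 K' M by simp
        also have "\<dots> = e / 2" using K' M by (simp add: d_def field_simps)
        finally show ?thesis using y0 by simp
      qed
      finally have "w y < y * e" .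
      moreover have "0 \<le> w y" using nn[OF y0(1)] .
      ultimately have "\<bar>w y / y\<bar> < e" using y0 by (simp add: abs_if field_simps)
      then show "dist ((w y - w 0) / (y - 0)) 0 < e" using w0 by (simp add: dist_real_def)
    qed
  qed
  then show ?thesis by (simp add: has_field_derivative_iff)
qed


lemma sg_powr:
  assumes n: "n \<ge> 2" and y: "y > 0"
  shows "(y^n / real n) powr al n \<le> y^(n-1)"
proof -
  have a: "0 \<le> al n" using al_bounds[OF n] by simp
  have "(y^n / real n) powr al n \<le> (y^n) powr al n"
    using n y a by (intro powr_mono2) (auto simp: divide_le_eq)
  also have "(y^n) powr al n = (y powr real n) powr al n" using y by (simp add: powr_realpow)
  also have "\<dots> = y powr (real n * al n)" by (simp add: powr_powr)
  also have "real n * al n = real (n-1)" using n by (simp add: al_def)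
  also have "y powr real (n-1) = y^(n-1)" using y by (simp add: powr_realpow)
  finally show ?thesis .
qed

theorem theorem3p5:
  fixes n :: nat and R \<epsilon> :: real and f :: "real \<Rightarrow> real"
  assumes "n \<ge> 2" and "R > 0" and "\<epsilon> > 0"
    and "set_integrable lborel {0<..<R} (\<lambda>t. t ^ (n - 1) * f t)"
    and "AE t in lborel. t \<in> {0<..<R} \<longrightarrow> f t \<ge> 0"
    and "\<not> (AE t in lborel. t \<in> {0<..<R} \<longrightarrow> f t = 0)"
  shows "\<exists>w w' w'' :: real \<Rightarrow> real.
           (\<forall>r\<in>{0..R}. w r \<ge> 0)
         \<and> (\<forall>r\<in>{0..R}. (w has_real_derivative w' r) (at r within {0..R}))
         \<and> (\<forall>r\<in>{0<..<R}. (w' has_real_derivative w'' r) (at r))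
         \<and> (\<forall>r\<in>{0<..<R}.
              - \<epsilon> * r ^ (n - 1) * deriv (\<lambda>s. w' s / s ^ (n - 1)) r
              + w r ^ n / (real n * r ^ (n * (n - 1))) = Lf n f r)
         \<and> w 0 = 0 \<and> w' 0 = 0 \<and> w' R = \<epsilon> * R ^ (n - 1)"
proof -
  note n = assms(1) and R = assms(2) and ep = assms(3)
  have n0: "n > 0" using n by simp
  define L where "L = Lf n f"
  note LP = L_props[OF n R assms(4) assms(5), folded L_def]
  define b where "b = R ^ n / real n"
  have b: "b > 0" using R n0 by (simp add: b_def)
  have rho_le: "rho n s \<le> R" if "s \<in> {0<..b}" for s
  proof -
    have "real n * s \<le> real n * b" using that n0 by simp
    also have "real n * b = R ^ n" using n0 by (simp add: b_def)
    finally have "root n (real n * s) \<le> root n (R ^ n)" using n0 by (simp add: real_root_le_iff)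
    then show ?thesis using R n0 by (simp add: rho_def real_root_power_cancel)
  qed
  have rho_p: "rho n s > 0" if "s \<in> {0<..b}" for s using rho_pos[OF n0, of s] that by auto
  have qc: "continuous_on {0<..b} (qq n)" unfolding qq_def
    using rho_p by (intro continuous_intros rho_cont) (auto simp: n0 dest!: rho_p)
  have lc: "continuous_on {0<..b} (ll n L)" unfolding ll_def
  proof (intro continuous_intros rho_cont)
    show "continuous_on {0<..b} (\<lambda>x. L (rho n x))"
      by (rule continuous_on_compose2[OF LP(1) rho_cont]) (use rho_le rho_p in \<open>auto simp: less_imp_le\<close>)
  qed (use rho_p in \<open>auto dest!: rho_p\<close>)
  have qp: "qq n s > 0" if "s \<in> {0<..b}" for s unfolding qq_def using rho_p[OF that] n0 by simp
  have lp: "ll n L s \<ge> 0" if "s \<in> {0<..b}" for s unfolding ll_def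
    using rho_p[OF that] rho_le[OF that] LP(3)[of "rho n s"] by simp
  have sup: "\<exists>K. K \<ge> \<epsilon> \<and> (\<forall>s\<in>{0<..b}. qq n s * Yf n e K s ^ n \<ge> ll n L s)" if e: "e > 0" for e
  proof -
    define thr where "thr = e^n / real n ^ n"
    have thr: "thr > 0" using e n0 by (simp add: thr_def)
    have "continuous (at 0 within {0..R}) L" using LP(1) R by (simp add: continuous_on_eq_continuous_within)
    then obtain d where d: "d > 0" "\<And>r. r \<in> {0..R} \<Longrightarrow> dist r 0 < d \<Longrightarrow> dist (L r) (L 0) < thr"
      using thr unfolding continuous_within_eps_delta by blast
    define r0 where "r0 = min (d/2) R"
    have r0: "r0 > 0" "r0 \<le> R" "r0 < d" using d R by (auto simp: r0_def)
    have Lsmall: "L r \<le> thr" if "r \<in> {0..r0}" for r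
      using d(2)[of r] that r0 LP(2) by (auto simp: dist_real_def)
    obtain Lm where Lm: "\<And>r. r \<in> {0..R} \<Longrightarrow> L r \<le> Lm"
      using continuous_attains_sup[OF compact_Icc _ LP(1)] R by fastforce
    have Lm0: "Lm \<ge> 0" using Lm[of 0] LP(2) R by auto
    define s0 where "s0 = r0 ^ n / real n"
    have s0: "s0 > 0" using r0 n0 by (simp add: s0_def)
    define K where "K = 1 + \<epsilon> + real n ^ n * Lm / s0"
    have K1: "K \<ge> 1" "K \<ge> \<epsilon>" using ep Lm0 s0 by (auto simp: K_def)
    have "qq n s * Yf n e K s ^ n \<ge> ll n L s" if s: "s \<in> {0<..b}" for s
    proof (rule Yf_super[OF n less_imp_le[OF e] _ ])
      show "0 \<le> K" using K1 by simp
      show "s > 0" using s by simp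
      show "L (rho n s) \<le> e ^ n / real n ^ n \<or> real n ^ n * L (rho n s) \<le> K ^ n * s"
      proof (cases "rho n s \<le> r0")
        case True
        then show ?thesis using Lsmall[of "rho n s"] rho_p[OF s] by (auto simp: thr_def)
      next
        case False
        have "r0 ^ n < rho n s ^ n" using False r0 n0 by (intro power_strict_mono) auto
        then have "s0 < s" using rho_pow[OF n0, of s] s n0 by (simp add: s0_def field_simps)
        have "real n ^ n * L (rho n s) \<le> real n ^ n * Lm"
          using Lm[of "rho n s"] rho_p[OF s] rho_le[OF s] by (intro mult_left_mono) auto
        also have "\<dots> = (real n ^ n * Lm / s0) * s0" using s0 by simp
        also have "\<dots> \<le> K * s0" using ep s0 unfolding K_def by (intro mult_right_mono) auto
        also have "\<dots> \<le> K * s" using \<open>s0 < s\<close> K1 by (intro mult_left_mono) auto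
        also have "\<dots> \<le> K ^ n * s"
        proof -
          have "K ^ 1 \<le> K ^ n" using K1 n0 by (intro power_increasing) auto
          then show ?thesis using s by (intro mult_right_mono) auto
        qed
        finally show ?thesis by blast
      qed
    qed
    then show ?thesis using K1 by blast
  qed
  obtain W G where WG: "W 0 = 0" "\<forall>s\<in>{0..b}. W s \<ge> 0" "\<forall>e>0. \<exists>K. \<forall>s\<in>{0<..b}. W s \<le> Yf n e K s"
     "\<forall>s\<in>{0<..b}. (W has_real_derivative G s) (at s within {0..b})"
     "\<forall>s\<in>{0<..<b}. (W has_real_derivative G s) (at s)"
     "\<forall>s\<in>{0<..<b}. (G has_real_derivative (qq n s * W s ^ n - ll n L s)/\<epsilon>) (at s)"
     "G b = \<epsilon>"
    using limit_solution[OF n b ep qc lc qp lp sup] by blast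
  define sg where "sg r = r^n / real n" for r :: real
  have sgd: "(sg has_real_derivative r^(n-1)) (at r)" for r
  proof -
    have "(sg has_real_derivative real n * r^(n-1) / real n) (at r)" unfolding sg_def
      by (auto intro!: derivative_eq_intros)
    then show ?thesis using n0 by simp
  qed
  have sg0: "sg 0 = 0" using n0 by (simp add: sg_def)
  have sgR: "sg R = b" by (simp add: sg_def b_def)
  have sg_in: "sg r \<in> {0<..b}" if "r \<in> {0<..R}" for r
    using that n0 power_mono[of r R n] by (auto simp: sg_def b_def divide_right_mono)
  have sg_in2: "sg r \<in> {0<..<b}" if "r \<in> {0<..<R}" for r
    using that n0 power_strict_mono[of r R n] by (auto simp: sg_def b_def divide_strict_right_mono)
  have sg_in3: "sg r \<in> {0..b}" if "r \<in> {0..R}" for r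
    using that n0 power_mono[of r R n] by (auto simp: sg_def b_def divide_right_mono)
  have rs: "rho n (sg r) = r" if "r \<ge> 0" for r using rho_sigma[OF n0 that] by (simp add: sg_def)
  define h where "h s = (qq n s * W s ^ n - ll n L s) / \<epsilon>" for s
  define w where "w r = W (sg r)" for r
  define w' where "w' r = (if r = 0 then 0 else r^(n-1) * G (sg r))" for r
  define w'' where "w'' r = real (n-1) * r^(n-1-1) * G (sg r) + r^(n-1) * (h (sg r) * r^(n-1))" for r
  have D1: "(w has_real_derivative w' r) (at r within {0..R})" if r: "r \<in> {0<..R}" for r
  proof -
    have "(W has_real_derivative G (sg r)) (at (sg r) within {0..b})" using WG(4) sg_in[OF r] by blast
    then have a: "(W has_real_derivative G (sg r)) (at (sg r) within sg ` {0..R})"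
      by (rule has_field_derivative_subset) (use sg_in3 in auto)
    have c: "(sg has_real_derivative r^(n-1)) (at r within {0..R})" using sgd by (rule has_field_derivative_at_within)
    have "(W \<circ> sg has_real_derivative G (sg r) * r^(n-1)) (at r within {0..R})"
      by (rule DERIV_image_chain[OF a c])
    moreover have "W \<circ> sg = w" by (auto simp: w_def)
    moreover have "w' r = G (sg r) * r^(n-1)" using r by (simp add: w'_def)
    ultimately show ?thesis by simp
  qed
  have D0: "(w has_real_derivative 0) (at 0 within {0..R})"
  proof (rule zero_deriv[OF n R])
    show "w 0 = 0" using WG(1) sg0 by (simp add: w_def)
    show "0 \<le> w y" if "y \<in> {0<..R}" for y using WG(2) sg_in[OF that] by (auto simp: w_def)
    show "\<exists>K. \<forall>y\<in>{0<..R}. w y \<le> e * y ^ (n - 1) + K * y ^ n" if e: "e > 0" for e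
    proof -
      obtain K where K: "\<forall>s\<in>{0<..b}. W s \<le> Yf n e K s" using WG(3) e by blast
      have "w y \<le> e * y ^ (n - 1) + (K / real n) * y ^ n" if y: "y \<in> {0<..R}" for y
      proof -
        have "w y \<le> e * (sg y) powr al n + K * sg y" using K sg_in[OF y] by (auto simp: w_def Yf_def)
        also have "e * (sg y) powr al n \<le> e * y^(n-1)"
          using sg_powr[OF n, of y] y e by (intro mult_left_mono) (auto simp: sg_def)
        also have "K * sg y = (K / real n) * y ^ n" by (simp add: sg_def)
        finally show ?thesis by simp
      qed
      then show ?thesis by blast
    qed
  qed
  have Gc: "((\<lambda>s. G (sg s)) has_real_derivative h (sg r) * r^(n-1)) (at r)" if r: "r \<in> {0<..<R}" for r
  proof -
    have "(G has_real_derivative h (sg r)) (at (sg r))" using WG(6) sg_in2[OF r] by (auto simp: h_def)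
    then show ?thesis using sgd by (rule DERIV_chain2)
  qed
  have D2: "(w' has_real_derivative w'' r) (at r)" if r: "r \<in> {0<..<R}" for r
  proof -
    have "((\<lambda>s. s^(n-1) * G (sg s)) has_real_derivative
        real (n-1) * r^(n-1-1) * G (sg r) + r^(n-1) * (h (sg r) * r^(n-1))) (at r)"
      using Gc[OF r] by (auto intro!: derivative_eq_intros)
    then show ?thesis unfolding w''_def
      by (rule has_field_derivative_transform_within_open[of _ _ _ "{0<..}"]) (use r in \<open>auto simp: w'_def\<close>)
  qed
  have D3: "- \<epsilon> * r ^ (n - 1) * deriv (\<lambda>s. w' s / s ^ (n - 1)) r
              + w r ^ n / (real n * r ^ (n * (n - 1))) = Lf n f r" if r: "r \<in> {0<..<R}" for r
  proof -
    have "((\<lambda>s. w' s / s ^ (n - 1)) has_real_derivative h (sg r) * r^(n-1)) (at r)"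
      by (rule has_field_derivative_transform_within_open[OF Gc[OF r], of "{0<..}"]) (use r in \<open>auto simp: w'_def\<close>)
    then have dd: "deriv (\<lambda>s. w' s / s ^ (n - 1)) r = h (sg r) * r^(n-1)" by (rule DERIV_imp_deriv)
    have r0: "r > 0" using r by simp
    define X where "X = W (sg r)"
    have e1: "r ^ (n * (n - 1) + 2 * (n - 1)) = r ^ (n * (n - 1)) * (r^(n-1) * r^(n-1))"
      by (simp add: power_add mult_2 )
    have e2: "r ^ (2 * (n - 1)) = r^(n-1) * r^(n-1)" by (simp add: mult_2 power_add)
    have "h (sg r) = (X^n / (real n * (r ^ (n * (n - 1)) * (r^(n-1) * r^(n-1)))) - L r / (r^(n-1) * r^(n-1))) / \<epsilon>"
      unfolding h_def qq_def ll_def rs[OF less_imp_le[OF r0]] e1 e2 X_def by simp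
    then show ?thesis unfolding dd using r0 ep n0 by (simp add: w_def X_def[symmetric] L_def field_simps)
  qed
  have F1: "\<forall>r\<in>{0..R}. w r \<ge> 0" using WG(2) sg_in3 by (auto simp: w_def)
  have F2: "\<forall>r\<in>{0..R}. (w has_real_derivative w' r) (at r within {0..R})"
  proof
    fix r assume r: "r \<in> {0..R}"
    show "(w has_real_derivative w' r) (at r within {0..R})"
    proof (cases "r = 0")
      case True then show ?thesis using D0 by (simp add: w'_def)
    next
      case False then show ?thesis using D1[of r] r by auto
    qed
  qed
  have F3: "\<forall>r\<in>{0<..<R}. (w' has_real_derivative w'' r) (at r)" using D2 by blast
  have F4: "\<forall>r\<in>{0<..<R}. - \<epsilon> * r ^ (n - 1) * deriv (\<lambda>s. w' s / s ^ (n - 1)) r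
              + w r ^ n / (real n * r ^ (n * (n - 1))) = Lf n f r" using D3 by blast
  have F5: "w 0 = 0" using WG(1) sg0 by (simp add: w_def)
  have F6: "w' 0 = 0" by (simp add: w'_def)
  have F7: "w' R = \<epsilon> * R ^ (n - 1)" using R WG(7) sgR by (simp add: w'_def)
  show ?thesis using F1 F2 F3 F4 F5 F6 F7 by blast
qed

end
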